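(* Let $n$ be a positive integer, let $1\le p\le n$ and $q=n+1-p$, and set $P=\binom{p}{2}$, $Q=\binom{q}{2}$. Then \[\binom{P+Q}{P}\cdot r(p\cdots 321)\cdot r(q\cdots 321) = \sum_{\pi\in\mathcal{B}(p,n)} r(\pi),\] where $p\cdots 321\in S_p$ and $q\cdots 321\in S_q$ denote the longest (reversal) permutations.
   Context: $S_n$ is the symmetric group on $\{1,\dots,n\}$, with elements in one-line notation $\pi=\pi_1\cdots\pi_n$. With $s_i=(i,i+1)$, a reduced word for $\pi$ is a word $i_1\cdots i_l$ of minimal length with $\pi=s_{i_1}\cdots s_{i_l}$; $r(\pi)$ is the number of reduced words of $\pi$ (so $r$ of the identity is $1$). For a word $w=w_1\cdots w_k$ with distinct integer letters, $\operatorname{fl}(w)=\phi(w_1)\cdots\phi(w_k)\in S_k$ where $\phi$ is the order-preserving bijection $\{w_1,\dots,w_k\}\to\{1,\dots,k\}$. The sets $\mathcal{B}(m,n)\subseteq S_n$ for $1\le m\le n$ are defined recursively: $\mathcal{B}(1,n)=\mathcal{B}(n,n)=\{n\cdots 321\}$, and for $1<m<n$, $\mathcal{B}(m,n)$ is the set of $\pi\in S_n$ such that either $\pi_1=m$ and $\operatorname{fl}(\pi_2\cdots\pi_n)\in\mathcal{B}(m-1,n-1)$, or $\pi_n=m$ and $\operatorname{fl}(\pi_1\cdots\pi_{n-1})\in\mathcal{B}(m,n-1)$. *)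

theory Defs
  imports Main
begin

definition perms :: "nat \<Rightarrow> nat list set" where
  "perms n = {xs. length xs = n \<and> distinct xs \<and> set xs = {1..n}}"

definition perm_of :: "nat list \<Rightarrow> nat \<Rightarrow> nat" where
  "perm_of xs j = (if 1 \<le> j \<and> j \<le> length xs then xs ! (j - 1) else j)"

definition adj :: "nat \<Rightarrow> nat \<Rightarrow> nat" where
  "adj i j = (if j = i then i + 1 else if j = i + 1 then i else j)"

definition word_perm :: "nat list \<Rightarrow> nat \<Rightarrow> nat" where
  "word_perm w = foldr (\<lambda>i f. adj i \<circ> f) w id"

definition words_of :: "nat \<Rightarrow> nat list \<Rightarrow> nat list set" where
  "words_of n xs = {w. set w \<subseteq> {1..<n} \<and> word_perm w = perm_of xs}"

definition coxeter_length :: "nat \<Rightarrow> nat list \<Rightarrow> nat" where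
  "coxeter_length n xs = (LEAST k. \<exists>w \<in> words_of n xs. length w = k)"

definition reduced_words :: "nat \<Rightarrow> nat list \<Rightarrow> nat list set" where
  "reduced_words n xs = {w \<in> words_of n xs. length w = coxeter_length n xs}"

definition num_reduced :: "nat \<Rightarrow> nat list \<Rightarrow> nat" where
  "num_reduced n xs = card (reduced_words n xs)"

definition fl :: "nat list \<Rightarrow> nat list" where
  "fl w = map (\<lambda>x. card {y \<in> set w. y \<le> x}) w"

text \<open>The sets B(m,n), meaningful for 1 \<le> m \<le> n.\<close>

function B :: "nat \<Rightarrow> nat \<Rightarrow> nat list set" where
  "B m n =
    (if 1 < m \<and> m < n then
       (let L = B (m - 1) (n - 1); R = B m (n - 1) in
        {xs \<in> perms n. (hd xs = m \<and> fl (tl xs) \<in> L) \<or> (last xs = m \<and> fl (butlast xs) \<in> R)})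
     else if m = 1 \<or> m = n then {rev [1..<n+1]}
     else {})"
  by pat_completeness auto
termination by (relation "measure snd") auto

end

theory Submission
  imports Defs
begin



lemma adj_adj[simp]: "adj i (adj i c) = c" by (auto simp: adj_def)
lemma adj_adj_comp[simp]: "adj i \<circ> adj i = id" by (auto simp: adj_def)

lemma adj_comm: "Suc i < j \<or> Suc j < i \<Longrightarrow> adj i (adj j c) = adj j (adj i c)"
  by (auto simp: adj_def)

lemma adj_braid: "adj i (adj (Suc i) (adj i c)) = adj (Suc i) (adj i (adj (Suc i) c))"
  by (auto simp: adj_def)

lemma word_perm_Nil[simp]: "word_perm [] = id" by (simp add: word_perm_def)
lemma word_perm_Cons[simp]: "word_perm (i # w) = adj i \<circ> word_perm w"
  by (simp add: word_perm_def)
lemma word_perm_append[simp]: "word_perm (xs @ ys) = word_perm xs \<circ> word_perm ys"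
  by (induction xs) auto
lemma word_perm_snoc: "word_perm (xs @ [i]) c = word_perm xs (adj i c)"
  by simp

definition isperm :: "nat \<Rightarrow> (nat \<Rightarrow> nat) \<Rightarrow> bool" where
  "isperm n f \<longleftrightarrow> inj_on f {1..n} \<and> f ` {1..n} = {1..n} \<and> (\<forall>c. c \<notin> {1..n} \<longrightarrow> f c = c)"

lemma isperm_id[simp]: "isperm n id" by (simp add: isperm_def)

lemma isperm_range: "isperm n f \<Longrightarrow> 1 \<le> c \<Longrightarrow> c \<le> n \<Longrightarrow> 1 \<le> f c \<and> f c \<le> n"
  unfolding isperm_def by (metis atLeastAtMost_iff imageI)

lemma isperm_out: "isperm n f \<Longrightarrow> \<not> (1 \<le> c \<and> c \<le> n) \<Longrightarrow> f c = c"
  unfolding isperm_def by auto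

lemma isperm_inj: "isperm n f \<Longrightarrow> f a = f b \<Longrightarrow> a = b"
proof -
  assume p: "isperm n f" and e: "f a = f b"
  show "a = b"
  proof (cases "a \<in> {1..n}"; cases "b \<in> {1..n}")
    assume "a \<in> {1..n}" "b \<in> {1..n}" then show ?thesis using p e unfolding isperm_def inj_on_def by blast
  next
    assume "a \<in> {1..n}" "b \<notin> {1..n}" then show ?thesis using p e
      by (metis atLeastAtMost_iff isperm_out isperm_range)
  next
    assume "a \<notin> {1..n}" "b \<in> {1..n}" then show ?thesis using p e
      by (metis atLeastAtMost_iff isperm_out isperm_range)
  next
    assume "a \<notin> {1..n}" "b \<notin> {1..n}" then show ?thesis using p e
      by (metis isperm_out atLeastAtMost_iff)
  qed
qed

lemma isperm_surj: "isperm n f \<Longrightarrow> 1 \<le> c \<Longrightarrow> c \<le> n \<Longrightarrow> \<exists>a. 1 \<le> a \<and> a \<le> n \<and> f a = c"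
  unfolding isperm_def by (metis atLeastAtMost_iff imageE)

lemma isperm_comp: "isperm n f \<Longrightarrow> isperm n g \<Longrightarrow> isperm n (f \<circ> g)"
proof -
  assume f: "isperm n f" and g: "isperm n g"
  have "inj_on (f \<circ> g) {1..n}"
    using f g unfolding isperm_def by (metis comp_inj_on)
  moreover have "(f \<circ> g) ` {1..n} = {1..n}"
    using f g unfolding isperm_def by (metis image_comp)
  moreover have "\<forall>c. c \<notin> {1..n} \<longrightarrow> (f \<circ> g) c = c"
    using f g unfolding isperm_def by simp
  ultimately show ?thesis unfolding isperm_def by blast
qed

lemma isperm_adj: "1 \<le> i \<Longrightarrow> i < n \<Longrightarrow> isperm n (adj i)"
proof -
  assume h: "1 \<le> i" "i < n"
  have inj: "inj_on (adj i) {1..n}" by (metis adj_adj inj_onI)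
  have sub: "adj i ` {1..n} \<subseteq> {1..n}" using h by (auto simp: adj_def)
  have sup: "{1..n} \<subseteq> adj i ` {1..n}"
  proof
    fix c assume c: "c \<in> {1..n}"
    have "adj i c \<in> {1..n}" using c sub by blast
    then show "c \<in> adj i ` {1..n}" by (metis adj_adj imageI)
  qed
  have out: "\<forall>c. c \<notin> {1..n} \<longrightarrow> adj i c = c" using h by (auto simp: adj_def)
  show ?thesis unfolding isperm_def using inj sub sup out by blast
qed

lemma isperm_word_perm: "set w \<subseteq> {1..<n} \<Longrightarrow> isperm n (word_perm w)"
proof (induction w)
  case Nil then show ?case by (simp add: isperm_def)
next
  case (Cons i w)
  then have "1 \<le> i" "i < n" "isperm n (word_perm w)" by auto
  then show ?case using isperm_comp[OF isperm_adj] by (metis word_perm_Cons)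
qed

lemma isperm_mono_n: "isperm n f \<Longrightarrow> n \<le> m \<Longrightarrow> isperm m f"
proof -
  assume p: "isperm n f" and nm: "n \<le> m"
  have inj: "inj_on f {1..m}" by (meson inj_onI isperm_inj p)
  have sub: "f ` {1..m} \<subseteq> {1..m}"
  proof
    fix y assume "y \<in> f ` {1..m}"
    then obtain c where c: "c \<in> {1..m}" "y = f c" by blast
    show "y \<in> {1..m}"
    proof (cases "c \<le> n")
      case True then show ?thesis using c p nm isperm_range[of n f c] by auto
    next
      case False then show ?thesis using c p isperm_out[of n f c] by auto
    qed
  qed
  have sup: "{1..m} \<subseteq> f ` {1..m}"
  proof
    fix c assume c: "c \<in> {1..m}"
    show "c \<in> f ` {1..m}"
    proof (cases "c \<le> n")
      case True then obtain a where "1 \<le> a" "a \<le> n" "f a = c" using c p isperm_surj[of n f c] by auto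
      then show ?thesis using nm by force
    next
      case False then have "f c = c" using p isperm_out[of n f c] by auto
      then show ?thesis using c by force
    qed
  qed
  have out: "\<forall>c. c \<notin> {1..m} \<longrightarrow> f c = c" using p nm isperm_out[of n f] by auto
  show ?thesis unfolding isperm_def using inj sub sup out by blast
qed



lemma word_perm_single[simp]: "word_perm [i] = adj i" by simp

lemma word_perm_snoc': "word_perm (w @ [i]) = word_perm w \<circ> adj i" by simp

definition inv_set :: "nat \<Rightarrow> (nat \<Rightarrow> nat) \<Rightarrow> (nat \<times> nat) set" where
  "inv_set n f = {(a,b). 1 \<le> a \<and> a < b \<and> b \<le> n \<and> f b < f a}"

definition ninv :: "nat \<Rightarrow> (nat \<Rightarrow> nat) \<Rightarrow> nat" where
  "ninv n f = card (inv_set n f)"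

lemma finite_inv_set[simp]: "finite (inv_set n f)"
proof -
  have "inv_set n f \<subseteq> {1..n} \<times> {1..n}" by (auto simp: inv_set_def)
  then show ?thesis by (rule finite_subset) auto
qed

lemma ninv_id'[simp]: "ninv n (\<lambda>x. x) = 0"
proof -
  have "inv_set n (\<lambda>x. x) = {}" by (auto simp: inv_set_def)
  then show ?thesis by (simp add: ninv_def)
qed

lemma ninv_id[simp]: "ninv n id = 0"
  using ninv_id' by (simp add: id_def)

lemma adj_order_iff: "\<not> (u = i \<and> v = Suc i) \<Longrightarrow> \<not> (u = Suc i \<and> v = i) \<Longrightarrow> (adj i u < adj i v) = (u < v)"
  by (auto simp: adj_def)

lemma pair_step:
  assumes "1 \<le> i" "i < n" "1 \<le> a" "a < b" "b \<le> n" "(a,b) \<noteq> (i, Suc i)"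
  shows "1 \<le> adj i a \<and> adj i a < adj i b \<and> adj i b \<le> n \<and> (adj i a, adj i b) \<noteq> (i, Suc i)"
  using assms by (auto simp: adj_def)

lemma ninv_right:
  assumes f: "isperm n f" and i: "1 \<le> i" "i < n"
  shows "ninv n (f \<circ> adj i) = (if f i < f (Suc i) then Suc (ninv n f) else ninv n f - 1)"
proof -
  define s where "s = adj i"
  define \<psi> where "\<psi> = (\<lambda>(a::nat,b::nat). (s a, s b))"
  define e where "e = (i, Suc i)"
  have img: "\<psi> ` (inv_set n (f \<circ> s) - {e}) = inv_set n f - {e}"
  proof
    show "\<psi> ` (inv_set n (f \<circ> s) - {e}) \<subseteq> inv_set n f - {e}"
    proof
      fix x assume "x \<in> \<psi> ` (inv_set n (f \<circ> s) - {e})"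
      then obtain a b where ab: "(a,b) \<in> inv_set n (f \<circ> s)" "(a,b) \<noteq> e" "x = (s a, s b)"
        unfolding \<psi>_def by auto
      then have h: "1 \<le> a" "a < b" "b \<le> n" "f (s b) < f (s a)" by (auto simp: inv_set_def)
      from pair_step[OF i h(1-3)] ab(2) have "1 \<le> s a \<and> s a < s b \<and> s b \<le> n \<and> (s a, s b) \<noteq> e"
        unfolding s_def e_def by auto
      then show "x \<in> inv_set n f - {e}" using h(4) ab(3) by (auto simp: inv_set_def)
    qed
  next
    show "inv_set n f - {e} \<subseteq> \<psi> ` (inv_set n (f \<circ> s) - {e})"
    proof
      fix x assume x: "x \<in> inv_set n f - {e}"
      then obtain a b where ab: "x = (a,b)" "1 \<le> a" "a < b" "b \<le> n" "f b < f a" "(a,b) \<noteq> e"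
        by (auto simp: inv_set_def)
      from pair_step[OF i ab(2-4)] ab(6) have "1 \<le> s a \<and> s a < s b \<and> s b \<le> n \<and> (s a, s b) \<noteq> e"
        unfolding s_def e_def by auto
      moreover have "(f \<circ> s) (s b) < (f \<circ> s) (s a)" using ab(5) unfolding s_def by simp
      ultimately have "(s a, s b) \<in> inv_set n (f \<circ> s) - {e}" by (auto simp: inv_set_def)
      moreover have "\<psi> (s a, s b) = x" using ab(1) unfolding \<psi>_def s_def by simp
      ultimately show "x \<in> \<psi> ` (inv_set n (f \<circ> s) - {e})" by (metis imageI)
    qed
  qed
  have inj: "inj_on \<psi> (inv_set n (f \<circ> s) - {e})"
    by (rule inj_onI) (auto simp: \<psi>_def s_def, metis adj_adj, metis adj_adj)
  have cd: "card (inv_set n (f \<circ> s) - {e}) = card (inv_set n f - {e})"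
    using card_image[OF inj] img by simp
  have fi: "f i \<noteq> f (Suc i)" using isperm_inj[OF f] by (metis n_not_Suc_n)
  have e1: "e \<in> inv_set n (f \<circ> s) \<longleftrightarrow> f i < f (Suc i)"
    using i unfolding e_def s_def inv_set_def by (simp add: adj_def)
  have e2: "e \<in> inv_set n f \<longleftrightarrow> f (Suc i) < f i"
    using i unfolding e_def inv_set_def by simp
  show ?thesis
  proof (cases "f i < f (Suc i)")
    case True
    then have "card (inv_set n (f \<circ> s)) = Suc (card (inv_set n (f \<circ> s) - {e}))"
      using e1 by (metis card_Suc_Diff1 finite_inv_set)
    moreover have "inv_set n f - {e} = inv_set n f" using e2 True by auto
    ultimately show ?thesis using True cd unfolding ninv_def s_def by simp
  next
    case False
    then have lt: "f (Suc i) < f i" using fi by simp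
    then have "card (inv_set n f) = Suc (card (inv_set n f - {e}))"
      using e2 by (metis card_Suc_Diff1 finite_inv_set)
    moreover have "inv_set n (f \<circ> s) - {e} = inv_set n (f \<circ> s)" using e1 False by auto
    ultimately show ?thesis using False cd unfolding ninv_def s_def by simp
  qed
qed

lemma ninv_left:
  assumes h: "isperm n h" and i: "1 \<le> i" "i < n"
    and ab: "1 \<le> a" "a < b" "b \<le> n" "h a = i" "h b = Suc i"
  shows "ninv n (adj i \<circ> h) = Suc (ninv n h)"
proof -
  have eq: "inv_set n (adj i \<circ> h) = insert (a,b) (inv_set n h)"
  proof (rule set_eqI)
    fix x :: "nat \<times> nat"
    obtain x1 x2 where x: "x = (x1,x2)" by fastforce
    show "x \<in> inv_set n (adj i \<circ> h) \<longleftrightarrow> x \<in> insert (a,b) (inv_set n h)"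
    proof (cases "(x1,x2) = (a,b)")
      case True then show ?thesis using x ab by (auto simp: inv_set_def adj_def)
    next
      case False
      have c1: "\<not> (h x2 = i \<and> h x1 = Suc i) \<or> \<not> (1 \<le> x1 \<and> x1 < x2 \<and> x2 \<le> n)"
        using ab isperm_inj[OF h, of x2 a] isperm_inj[OF h, of x1 b] by auto
      have c2: "\<not> (h x2 = Suc i \<and> h x1 = i) \<or> \<not> (1 \<le> x1 \<and> x1 < x2 \<and> x2 \<le> n)"
        using ab False isperm_inj[OF h, of x2 b] isperm_inj[OF h, of x1 a] by auto
      show ?thesis using x False c1 c2 adj_order_iff[of "h x2" i "h x1"]
        by (auto simp: inv_set_def)
    qed
  qed
  have "(a,b) \<notin> inv_set n h" using ab by (simp add: inv_set_def)
  then show ?thesis unfolding ninv_def eq by simp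
qed

lemma ninv_word_le: "set w \<subseteq> {1..<n} \<Longrightarrow> ninv n (word_perm w) \<le> length w"
proof (induction w rule: rev_induct)
  case Nil then show ?case by simp
next
  case (snoc i w)
  then have w: "set w \<subseteq> {1..<n}" and i: "1 \<le> i" "i < n" by auto
  have "ninv n (word_perm w \<circ> adj i) \<le> Suc (ninv n (word_perm w))"
    using ninv_right[OF isperm_word_perm[OF w] i] by (auto split: if_splits)
  then show ?case unfolding word_perm_snoc' using snoc.IH[OF w] by (metis Suc_le_mono le_trans length_append_singleton)
qed

lemma isperm_incr_id:
  assumes f: "isperm n f" and inc: "\<forall>i. 1 \<le> i \<and> i < n \<longrightarrow> f i < f (Suc i)"
  shows "f = id"
proof
  fix c show "f c = id c"
  proof (cases "1 \<le> c \<and> c \<le> n")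
    case False then show ?thesis using isperm_out[OF f] by simp
  next
    case True
    have ge: "\<forall>d. 1 \<le> d \<and> d \<le> n \<longrightarrow> d \<le> f d"
    proof (intro allI impI)
      fix d assume "1 \<le> d \<and> d \<le> n"
      then show "d \<le> f d"
      proof (induction d)
        case 0 then show ?case by simp
      next
        case (Suc d)
        show ?case
        proof (cases "d = 0")
          case True then show ?thesis using isperm_range[OF f, of 1] Suc.prems by simp
        next
          case False
          then have "d \<le> f d" using Suc by simp
          moreover have "f d < f (Suc d)" using inc Suc.prems False by simp
          ultimately show ?thesis by simp
        qed
      qed
    qed
    have le: "f c \<le> c"
    proof (rule ccontr)
      assume "\<not> f c \<le> c"
      then have fc: "c < f c" by simp
      have "\<forall>k. c + k \<le> n \<longrightarrow> c + k < f (c + k)"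
      proof (intro allI)
        fix k show "c + k \<le> n \<longrightarrow> c + k < f (c + k)"
        proof (induction k)
          case 0 then show ?case using fc by simp
        next
          case (Suc k)
          show ?case
          proof
            assume "c + Suc k \<le> n"
            then have "c + k < f (c + k)" "f (c+k) < f (Suc (c+k))" using Suc True inc by auto
            then show "c + Suc k < f (c + Suc k)" by simp
          qed
        qed
      qed
      then have "n < f n" using True by (metis le_add_diff_inverse order_refl)
      moreover have "f n \<le> n" using isperm_range[OF f, of n] True by simp
      ultimately show False by simp
    qed
    show ?thesis using ge le True by (simp add: le_antisym)
  qed
qed

lemma exists_reduced:
  assumes "isperm n f"
  shows "\<exists>w. set w \<subseteq> {1..<n} \<and> word_perm w = f \<and> length w = ninv n f"
  using assms
proof (induction "ninv n f" arbitrary: f rule: less_induct)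
  case less
  show ?case
  proof (cases "\<forall>i. 1 \<le> i \<and> i < n \<longrightarrow> f i < f (Suc i)")
    case True
    then have "f = id" using isperm_incr_id less.prems by blast
    then show ?thesis by (intro exI[of _ "[]"]) simp
  next
    case False
    then obtain i where i: "1 \<le> i" "i < n" "\<not> f i < f (Suc i)" by blast
    define g where "g = f \<circ> adj i"
    have g: "isperm n g" unfolding g_def using less.prems isperm_comp isperm_adj i by blast
    have fg: "f = g \<circ> adj i" unfolding g_def by (simp add: comp_assoc)
    have gi: "g i < g (Suc i)"
    proof -
      have "f i \<noteq> f (Suc i)" using isperm_inj[OF less.prems] by (metis n_not_Suc_n)
      then show ?thesis using i(3) unfolding g_def by (simp add: adj_def)
    qed
    have "ninv n f = Suc (ninv n g)" using ninv_right[OF g i(1,2)] gi fg by simp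
    then obtain w where w: "set w \<subseteq> {1..<n}" "word_perm w = g" "length w = ninv n g"
      using less.hyps[of g] g by auto
    show ?thesis
      by (intro exI[of _ "w @ [i]"]) (use w i fg \<open>ninv n f = Suc (ninv n g)\<close> in \<open>auto simp: word_perm_snoc'\<close>)
  qed
qed



definition Red :: "nat \<Rightarrow> (nat \<Rightarrow> nat) \<Rightarrow> nat list set" where
  "Red n f = {w. set w \<subseteq> {1..<n} \<and> word_perm w = f \<and> length w = ninv n f}"

lemma RedD: "w \<in> Red n f \<Longrightarrow> set w \<subseteq> {1..<n} \<and> word_perm w = f \<and> length w = ninv n f"
  by (simp add: Red_def)

lemma Red_isperm: "w \<in> Red n f \<Longrightarrow> isperm n f"
  using RedD isperm_word_perm by metis

lemma Red_le: "set w \<subseteq> {1..<n} \<Longrightarrow> word_perm w = f \<Longrightarrow> length w \<le> ninv n f \<Longrightarrow> w \<in> Red n f"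
  using ninv_word_le[of w n] by (auto simp: Red_def)

lemma Red_nonempty: "isperm n f \<Longrightarrow> \<exists>w. w \<in> Red n f"
  using exists_reduced by (auto simp: Red_def)

lemma Red_Nil: "[] \<in> Red n id"
  by (simp add: Red_def)

lemma Red_id: "y \<in> Red n id \<Longrightarrow> y = []"
  by (simp add: Red_def)

lemma isperm_inj': "isperm n f \<Longrightarrow> a \<noteq> b \<Longrightarrow> f a \<noteq> f b"
  using isperm_inj by metis

lemma Red_snoc_D:
  assumes "w @ [i] \<in> Red n f"
  shows "w \<in> Red n (f \<circ> adj i) \<and> f (Suc i) < f i \<and> 1 \<le> i \<and> i < n"
proof -
  from RedD[OF assms] have s: "set w \<subseteq> {1..<n}" and i: "1 \<le> i" "i < n"
    and fw: "word_perm w \<circ> adj i = f" and len: "Suc (length w) = ninv n f"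
    by (auto simp: word_perm_snoc')
  define g where "g = word_perm w"
  have g: "isperm n g" unfolding g_def using isperm_word_perm[OF s] .
  have gl: "ninv n g \<le> length w" unfolding g_def using ninv_word_le[OF s] .
  have nr: "ninv n f = (if g i < g (Suc i) then Suc (ninv n g) else ninv n g - 1)"
    using ninv_right[OF g i] fw unfolding g_def by simp
  have gi: "g i < g (Suc i)" using nr len gl by (auto split: if_splits)
  then have ng: "ninv n g = length w" using nr len by simp
  have "f \<circ> adj i = g" using fw unfolding g_def by (auto simp: comp_assoc)
  moreover have "f (Suc i) < f i" using gi fw unfolding g_def by (auto simp: adj_def)
  ultimately show ?thesis using s i ng unfolding g_def Red_def by auto
qed

lemma Red_snoc_I:
  assumes w: "w \<in> Red n (f \<circ> adj i)" and d: "f (Suc i) < f i" and f: "isperm n f"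
    and i: "1 \<le> i" "i < n"
  shows "w @ [i] \<in> Red n f"
proof -
  define g where "g = f \<circ> adj i"
  have g: "isperm n g" unfolding g_def using isperm_comp[OF f isperm_adj[OF i]] .
  have gi: "g i < g (Suc i)" using d unfolding g_def by (simp add: adj_def)
  have fg: "g \<circ> adj i = f" unfolding g_def by (auto simp: comp_assoc)
  have "ninv n f = Suc (ninv n g)" using ninv_right[OF g i] gi fg by simp
  moreover have "word_perm w = g" "length w = ninv n g" "set w \<subseteq> {1..<n}"
    using RedD[OF w] unfolding g_def by auto
  ultimately show ?thesis using fg i unfolding Red_def by (auto simp: word_perm_snoc')
qed

lemma comm_fun1: "Suc i < j \<or> Suc j < i \<Longrightarrow> (f \<circ> adj i) \<circ> adj j = (f \<circ> adj j) \<circ> adj i"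
  by (rule ext) (metis adj_comm comp_apply)

lemma comm_fun2: "Suc i < j \<or> Suc j < i \<Longrightarrow> ((f \<circ> adj i) \<circ> adj j) \<circ> adj i = f \<circ> adj j"
  by (rule ext) (metis adj_comm adj_adj comp_apply)

lemma braid_fun: "j = Suc i \<or> i = Suc j \<Longrightarrow>
    ((((f \<circ> adj i) \<circ> adj j) \<circ> adj i) \<circ> adj j) \<circ> adj i = f \<circ> adj j"
proof (rule ext)
  fix c assume h: "j = Suc i \<or> i = Suc j"
  have "adj i (adj j (adj i (adj j (adj i c)))) = adj j c"
  proof (cases "j = Suc i")
    case True then show ?thesis by (simp add: adj_braid)
  next
    case False then have "i = Suc j" using h by simp
    then show ?thesis by (simp add: adj_braid[symmetric])
  qed
  then show "(((((f \<circ> adj i) \<circ> adj j) \<circ> adj i) \<circ> adj j) \<circ> adj i) c = (f \<circ> adj j) c" by simp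
qed

lemma adj_adj_f[simp]: "(f \<circ> adj i) \<circ> adj i = f"
  by (rule ext) simp

lemma braid_desc:
  fixes \<pi> :: "nat \<Rightarrow> nat"
  assumes "j = Suc i \<or> i = Suc j" "\<pi> (Suc i) < \<pi> i" "\<pi> (Suc j) < \<pi> j"
  shows "(\<pi> \<circ> adj i) (Suc j) < (\<pi> \<circ> adj i) j \<and> (\<pi> \<circ> adj i \<circ> adj j) (Suc i) < (\<pi> \<circ> adj i \<circ> adj j) i"
  proof (cases "j = Suc i")
  case True
  have "\<pi> (Suc (Suc i)) < \<pi> i" using assms(2) assms(3)[unfolded True] by linarith
  then show ?thesis using assms True by (simp add: adj_def)
next
  case False
  then have ij: "i = Suc j" using assms(1) by simp
  have "\<pi> (Suc (Suc j)) < \<pi> j" using assms(3) assms(2)[unfolded ij] by linarith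
  then show ?thesis using assms ij by (simp add: adj_def)
qed

definition inSh :: "nat \<Rightarrow> (nat \<Rightarrow> bool) \<Rightarrow> (nat \<Rightarrow> nat) \<Rightarrow> (nat \<Rightarrow> nat) \<Rightarrow> nat list \<Rightarrow> bool" where
  "inSh n P \<alpha> \<beta> w \<longleftrightarrow> set w \<subseteq> {1..<n} \<and> filter P w \<in> Red n \<alpha> \<and> filter (\<lambda>x. \<not> P x) w \<in> Red n \<beta>"

lemma inSh_sym: "inSh n P \<alpha> \<beta> w \<longleftrightarrow> inSh n (\<lambda>x. \<not> P x) \<beta> \<alpha> w"
  by (auto simp: inSh_def)

lemma ext_L:
  assumes "inSh n P (\<gamma> \<circ> adj j) \<delta> y" "P j" "\<gamma> (Suc j) < \<gamma> j" "isperm n \<gamma>" "1 \<le> j" "j < n"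
  shows "inSh n P \<gamma> \<delta> (y @ [j])"
  using assms Red_snoc_I[of "filter P y" n \<gamma> j] by (auto simp: inSh_def)

lemma ext_R:
  assumes "inSh n P \<gamma> (\<delta> \<circ> adj j) y" "\<not> P j" "\<delta> (Suc j) < \<delta> j" "isperm n \<delta>" "1 \<le> j" "j < n"
  shows "inSh n P \<gamma> \<delta> (y @ [j])"
  using assms Red_snoc_I[of "filter (\<lambda>x. \<not> P x) y" n \<delta> j] by (auto simp: inSh_def)



lemma braid_pt: "j = Suc i \<or> i = Suc j \<Longrightarrow> adj i (adj j (adj i (adj j (adj i c)))) = adj j c"
  using braid_fun[of j i id] by (metis comp_apply id_apply)

lemma G_step:
  assumes IH: "\<And>P \<alpha> \<beta> v. length v < length w \<Longrightarrow> inSh n P \<alpha> \<beta> v \<Longrightarrow>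
      v \<in> Red n (word_perm v) \<and> (\<forall>y\<in>Red n (word_perm v). inSh n P \<alpha> \<beta> y)"
    and sh: "inSh n P \<alpha> \<beta> w" and w: "w = w' @ [i]" and Pi: "P i"
  shows "w \<in> Red n (word_perm w) \<and> (\<forall>y\<in>Red n (word_perm w). inSh n P \<alpha> \<beta> y)"
proof -
  have setw: "set w \<subseteq> {1..<n}" using sh by (simp add: inSh_def)
  then have i: "1 \<le> i" "i < n" and setw': "set w' \<subseteq> {1..<n}" using w by auto
  have fPw: "filter P w' @ [i] \<in> Red n \<alpha>" using sh w Pi by (simp add: inSh_def)
  have fNw: "filter (\<lambda>x. \<not> P x) w' \<in> Red n \<beta>" using sh w Pi by (simp add: inSh_def)
  have \<alpha>: "isperm n \<alpha>" using Red_isperm[OF fPw] .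
  have \<beta>: "isperm n \<beta>" using Red_isperm[OF fNw] .
  from Red_snoc_D[OF fPw] have fPw': "filter P w' \<in> Red n (\<alpha> \<circ> adj i)" and \<alpha>i: "\<alpha> (Suc i) < \<alpha> i"
    by auto
  have sh': "inSh n P (\<alpha> \<circ> adj i) \<beta> w'" using setw' fPw' fNw by (simp add: inSh_def)
  have lw': "length w' < length w" using w by simp
  define \<pi>' where "\<pi>' = word_perm w'"
  have \<pi>': "isperm n \<pi>'" unfolding \<pi>'_def using isperm_word_perm[OF setw'] .
  from IH[OF lw' sh'] have w'red: "w' \<in> Red n \<pi>'" and all': "\<forall>y\<in>Red n \<pi>'. inSh n P (\<alpha> \<circ> adj i) \<beta> y"
    unfolding \<pi>'_def by auto
  have asc: "\<pi>' i < \<pi>' (Suc i)"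
  proof (rule ccontr)
    assume "\<not> \<pi>' i < \<pi>' (Suc i)"
    then have d: "\<pi>' (Suc i) < \<pi>' i" using isperm_inj'[OF \<pi>', of i "Suc i"] by simp
    obtain z where z: "z \<in> Red n (\<pi>' \<circ> adj i)"
      using Red_nonempty isperm_comp[OF \<pi>' isperm_adj[OF i]] by blast
    have "z @ [i] \<in> Red n \<pi>'" using Red_snoc_I[OF z d \<pi>' i] .
    then have "inSh n P (\<alpha> \<circ> adj i) \<beta> (z @ [i])" using all' by blast
    then have "filter P z @ [i] \<in> Red n (\<alpha> \<circ> adj i)" using Pi by (simp add: inSh_def)
    then have "(\<alpha> \<circ> adj i) (Suc i) < (\<alpha> \<circ> adj i) i" using Red_snoc_D by blast
    then show False using \<alpha>i by (simp add: adj_def)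
  qed
  define \<pi> where "\<pi> = \<pi>' \<circ> adj i"
  have \<pi>: "isperm n \<pi>" unfolding \<pi>_def using isperm_comp[OF \<pi>' isperm_adj[OF i]] .
  have \<pi>\<pi>': "\<pi> \<circ> adj i = \<pi>'" unfolding \<pi>_def by simp
  have \<pi>i: "\<pi> (Suc i) < \<pi> i" using asc unfolding \<pi>_def by (simp add: adj_def)
  have wp: "word_perm w = \<pi>" unfolding \<pi>_def \<pi>'_def w by (simp add: word_perm_snoc')
  have wred: "w \<in> Red n \<pi>" unfolding w using Red_snoc_I[of w' n \<pi> i] w'red \<pi>\<pi>' \<pi>i \<pi> i by simp
  have II: "inSh n P \<alpha> \<beta> y" if y: "y \<in> Red n \<pi>" for y
  proof -
    have "length y = length w" using RedD[OF y] RedD[OF wred] by simp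
    then have "y \<noteq> []" using w by auto
    then obtain y' j where yj: "y = y' @ [j]" by (metis rev_exhaust)
    from Red_snoc_D[of y' j n \<pi>] y yj have y': "y' \<in> Red n (\<pi> \<circ> adj j)" and \<pi>j: "\<pi> (Suc j) < \<pi> j"
      and j: "1 \<le> j" "j < n" by auto
    show ?thesis
    proof (cases "j = i")
      case True
      then have "inSh n P (\<alpha> \<circ> adj i) \<beta> y'" using y' all' \<pi>\<pi>' by simp
      then show ?thesis using ext_L[of n P \<alpha> i \<beta> y'] yj True Pi \<alpha>i \<alpha> i by simp
    next
      case False
      show ?thesis
      proof (cases "Suc i < j \<or> Suc j < i")
        case comm: True
        define \<rho> where "\<rho> = (\<pi> \<circ> adj i) \<circ> adj j"
        have \<rho>: "isperm n \<rho>" unfolding \<rho>_def using isperm_comp[OF isperm_comp[OF \<pi> isperm_adj[OF i]] isperm_adj[OF j]] .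
        obtain z where z: "z \<in> Red n \<rho>" using Red_nonempty[OF \<rho>] by blast
        have dj: "(\<pi> \<circ> adj i) (Suc j) < (\<pi> \<circ> adj i) j" using \<pi>j comm by (auto simp: adj_def)
        have "z @ [j] \<in> Red n \<pi>'"
          using Red_snoc_I[of z n "\<pi> \<circ> adj i" j] z dj \<pi>\<pi>' \<pi>' j unfolding \<rho>_def by simp
        then have shz: "inSh n P (\<alpha> \<circ> adj i) \<beta> (z @ [j])" using all' by blast
        have setz: "set z \<subseteq> {1..<n}" using RedD[OF z] by simp
        have lz: "length (z @ [i]) < length w"
          using RedD[OF \<open>z @ [j] \<in> Red n \<pi>'\<close>] RedD[OF w'red] w by simp
        have wpz: "word_perm (z @ [i]) = \<pi> \<circ> adj j"
          using RedD[OF z] comm_fun2[OF comm, of \<pi>] unfolding \<rho>_def by (simp add: word_perm_snoc')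
        show ?thesis
        proof (cases "P j")
          case Pj: True
          have fz: "filter P z @ [j] \<in> Red n (\<alpha> \<circ> adj i)" using shz Pj by (simp add: inSh_def)
          from Red_snoc_D[OF fz] have fz': "filter P z \<in> Red n ((\<alpha> \<circ> adj i) \<circ> adj j)"
            and aj: "(\<alpha> \<circ> adj i) (Suc j) < (\<alpha> \<circ> adj i) j" by auto
          have \<alpha>j: "\<alpha> (Suc j) < \<alpha> j" using aj comm by (auto simp: adj_def)
          define \<gamma> where "\<gamma> = \<alpha> \<circ> adj j"
          have \<gamma>: "isperm n \<gamma>" unfolding \<gamma>_def using isperm_comp[OF \<alpha> isperm_adj[OF j]] .
          have \<gamma>i: "\<gamma> (Suc i) < \<gamma> i" unfolding \<gamma>_def using \<alpha>i comm by (auto simp: adj_def)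
          have "inSh n P (\<gamma> \<circ> adj i) \<beta> z"
            using fz' comm_fun1[OF comm, of \<alpha>] setz shz Pj unfolding \<gamma>_def by (simp add: inSh_def)
          then have "inSh n P \<gamma> \<beta> (z @ [i])" using ext_L[of n P \<gamma> i \<beta> z] Pi \<gamma>i \<gamma> i by blast
          then have "\<forall>y\<in>Red n (\<pi> \<circ> adj j). inSh n P \<gamma> \<beta> y" using IH[OF lz] wpz by simp
          then have "inSh n P \<gamma> \<beta> y'" using y' by blast
          then show ?thesis using ext_L[of n P \<alpha> j \<beta> y'] Pj \<alpha>j \<alpha> j yj unfolding \<gamma>_def by simp
        next
          case Nj: False
          have fz: "filter (\<lambda>x. \<not> P x) z @ [j] \<in> Red n \<beta>" using shz Nj by (simp add: inSh_def)
          from Red_snoc_D[OF fz] have fz': "filter (\<lambda>x. \<not> P x) z \<in> Red n (\<beta> \<circ> adj j)"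
            and \<beta>j: "\<beta> (Suc j) < \<beta> j" by auto
          have "inSh n P (\<alpha> \<circ> adj i) (\<beta> \<circ> adj j) z"
            using fz' setz shz Nj by (simp add: inSh_def)
          then have "inSh n P \<alpha> (\<beta> \<circ> adj j) (z @ [i])" using ext_L[of n P \<alpha> i "\<beta> \<circ> adj j" z] Pi \<alpha>i \<alpha> i by blast
          then have "\<forall>y\<in>Red n (\<pi> \<circ> adj j). inSh n P \<alpha> (\<beta> \<circ> adj j) y" using IH[OF lz] wpz by simp
          then have "inSh n P \<alpha> (\<beta> \<circ> adj j) y'" using y' by blast
          then show ?thesis using ext_R[of n P \<alpha> \<beta> j y'] Nj \<beta>j \<beta> j yj by simp
        qed
      next
        case nc: False
        then have br: "j = Suc i \<or> i = Suc j" using False by auto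
        from braid_desc[OF br \<pi>i \<pi>j] have d1: "(\<pi> \<circ> adj i) (Suc j) < (\<pi> \<circ> adj i) j"
          and d2: "(\<pi> \<circ> adj i \<circ> adj j) (Suc i) < (\<pi> \<circ> adj i \<circ> adj j) i" by auto
        define \<rho> where "\<rho> = ((\<pi> \<circ> adj i) \<circ> adj j) \<circ> adj i"
        have pij: "isperm n ((\<pi> \<circ> adj i) \<circ> adj j)" using isperm_comp[OF isperm_comp[OF \<pi> isperm_adj[OF i]] isperm_adj[OF j]] .
        have \<rho>: "isperm n \<rho>" unfolding \<rho>_def using isperm_comp[OF pij isperm_adj[OF i]] .
        obtain z where z: "z \<in> Red n \<rho>" using Red_nonempty[OF \<rho>] by blast
        have zi: "z @ [i] \<in> Red n ((\<pi> \<circ> adj i) \<circ> adj j)"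
          using Red_snoc_I[of z n "(\<pi> \<circ> adj i) \<circ> adj j" i] z d2 pij i unfolding \<rho>_def by simp
        have zij: "z @ [i, j] \<in> Red n \<pi>'"
          using Red_snoc_I[of "z @ [i]" n "\<pi> \<circ> adj i" j] zi d1 \<pi>\<pi>' \<pi>' j by simp
        then have shz: "inSh n P (\<alpha> \<circ> adj i) \<beta> (z @ [i, j])" using all' by blast
        have setz: "set z \<subseteq> {1..<n}" using RedD[OF z] by simp
        show ?thesis
        proof (cases "P j")
          case Nj: False
          have "filter P z @ [i] \<in> Red n (\<alpha> \<circ> adj i)" using shz Nj Pi by (simp add: inSh_def)
          then have "(\<alpha> \<circ> adj i) (Suc i) < (\<alpha> \<circ> adj i) i" using Red_snoc_D by blast
          then show ?thesis using \<alpha>i by (simp add: adj_def)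
        next
          case Pj: True
          define x where "x = filter P z"
          have fx: "x @ [i, j] \<in> Red n (\<alpha> \<circ> adj i)" using shz Pj Pi unfolding x_def by (simp add: inSh_def)
          have setx: "set x \<subseteq> {1..<n}" using setz unfolding x_def by auto
          have wpx: "word_perm x \<circ> adj i \<circ> adj j = \<alpha> \<circ> adj i"
            using RedD[OF fx] by (simp add: comp_assoc)
          have wx: "word_perm x d = \<alpha> (adj i (adj j (adj i d)))" for d
          proof -
            have "word_perm x (adj i (adj j (adj j (adj i d)))) = \<alpha> (adj i (adj j (adj i d)))"
              using fun_cong[OF wpx, of "adj j (adj i d)"] by simp
            then show ?thesis by simp
          qed
          have wpx2: "word_perm (x @ [j, i]) = \<alpha> \<circ> adj j"
          proof (rule ext)
            fix c show "word_perm (x @ [j, i]) c = (\<alpha> \<circ> adj j) c"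
              using wx[of "adj j (adj i c)"] braid_pt[OF br, of c] by simp
          qed
          have na: "ninv n \<alpha> = Suc (ninv n (\<alpha> \<circ> adj i))"
          proof -
            have g: "isperm n (\<alpha> \<circ> adj i)" using isperm_comp[OF \<alpha> isperm_adj[OF i]] .
            have "(\<alpha> \<circ> adj i) i < (\<alpha> \<circ> adj i) (Suc i)" using \<alpha>i by (simp add: adj_def)
            then show ?thesis using ninv_right[OF g i] by simp
          qed
          have lx: "length (x @ [j, i]) = ninv n \<alpha> - 1" using RedD[OF fx] na by simp
          have nj: "ninv n \<alpha> - 1 \<le> ninv n (\<alpha> \<circ> adj j)" using ninv_right[OF \<alpha> j] by (auto split: if_splits)
          have xr: "x @ [j, i] \<in> Red n (\<alpha> \<circ> adj j)"
            using Red_le[of "x @ [j, i]" n "\<alpha> \<circ> adj j"] setx i j wpx2 lx nj by simp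
          have \<alpha>j: "\<alpha> (Suc j) < \<alpha> j"
          proof (rule ccontr)
            assume "\<not> \<alpha> (Suc j) < \<alpha> j"
            then have "\<alpha> j < \<alpha> (Suc j)" using isperm_inj'[OF \<alpha>, of j "Suc j"] by simp
            then have "ninv n (\<alpha> \<circ> adj j) = Suc (ninv n \<alpha>)" using ninv_right[OF \<alpha> j] by simp
            then show False using RedD[OF xr] lx by simp
          qed
          have shz2: "inSh n P (\<alpha> \<circ> adj j) \<beta> (z @ [j, i])"
            using xr shz Pj Pi setz unfolding x_def by (simp add: inSh_def)
          have lz: "length (z @ [j, i]) < length w"
            using RedD[OF zij] RedD[OF w'red] w by simp
          have wpz: "word_perm (z @ [j, i]) = \<pi> \<circ> adj j"
          proof (rule ext)
            fix c show "word_perm (z @ [j, i]) c = (\<pi> \<circ> adj j) c"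
              using RedD[OF z] braid_pt[OF br, of c] unfolding \<rho>_def by simp
          qed
          have "\<forall>y\<in>Red n (\<pi> \<circ> adj j). inSh n P (\<alpha> \<circ> adj j) \<beta> y" using IH[OF lz shz2] wpz by simp
          then have "inSh n P (\<alpha> \<circ> adj j) \<beta> y'" using y' by blast
          then show ?thesis using ext_L[of n P \<alpha> j \<beta> y'] Pj \<alpha>j \<alpha> j yj by simp
        qed
      qed
    qed
  qed
  show ?thesis using wred II wp by simp
qed

theorem shuffle_main:
  "inSh n P \<alpha> \<beta> w \<Longrightarrow> w \<in> Red n (word_perm w) \<and> (\<forall>y\<in>Red n (word_perm w). inSh n P \<alpha> \<beta> y)"
proof (induction "length w" arbitrary: P \<alpha> \<beta> w rule: less_induct)
  case less
  show ?case
  proof (cases w rule: rev_exhaust)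
    case Nil
    then have "\<alpha> = id" "\<beta> = id" using less.prems by (auto simp: inSh_def Red_def)
    then show ?thesis using Nil less.prems Red_Nil Red_id by auto
  next
    case (snoc w' i)
    show ?thesis
    proof (cases "P i")
      case True
      show ?thesis using G_step[OF less.hyps less.prems snoc True] by blast
    next
      case False
      have sh: "inSh n (\<lambda>x. \<not> P x) \<beta> \<alpha> w" using less.prems inSh_sym by blast
      have IH': "\<And>Q \<alpha>' \<beta>' v. length v < length w \<Longrightarrow> inSh n Q \<alpha>' \<beta>' v \<Longrightarrow>
          v \<in> Red n (word_perm v) \<and> (\<forall>y\<in>Red n (word_perm v). inSh n Q \<alpha>' \<beta>' y)"
        using less.hyps by blast
      from G_step[OF IH' sh snoc] False
      show ?thesis using inSh_sym by blast
    qed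
  qed
qed



definition Shuf :: "(nat \<Rightarrow> bool) \<Rightarrow> nat list \<Rightarrow> nat list \<Rightarrow> nat list set" where
  "Shuf P u v = {w. filter P w = u \<and> filter (\<lambda>x. \<not> P x) w = v}"

lemma Shuf_Nil_Nil: "Shuf P [] [] = {[]}"
proof -
  have "w = []" if "filter P w = []" "filter (\<lambda>x. \<not> P x) w = []" for w
    using sum_length_filter_compl[of P w] that by simp
  then show ?thesis by (auto simp: Shuf_def)
qed

lemma Shuf_Nil_left: "set v \<subseteq> {x. \<not> P x} \<Longrightarrow> Shuf P [] v = {v}"
proof -
  assume v: "set v \<subseteq> {x. \<not> P x}"
  have "w = v" if "filter P w = []" "filter (\<lambda>x. \<not> P x) w = v" for w
  proof -
    have "\<forall>x\<in>set w. \<not> P x" using that(1) by (simp add: filter_empty_conv)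
    then have "filter (\<lambda>x. \<not> P x) w = w" by simp
    then show ?thesis using that(2) by simp
  qed
  moreover have "filter P v = []" using v by (intro filter_False) auto
  moreover have "filter (\<lambda>x. \<not> P x) v = v" using v by (intro filter_True) auto
  ultimately show ?thesis by (auto simp: Shuf_def)
qed

lemma Shuf_Nil_right: "set u \<subseteq> {x. P x} \<Longrightarrow> Shuf P u [] = {u}"
proof -
  assume u: "set u \<subseteq> {x. P x}"
  have "w = u" if "filter P w = u" "filter (\<lambda>x. \<not> P x) w = []" for w
  proof -
    have "\<forall>x\<in>set w. P x" using that(2) by (simp add: filter_empty_conv)
    then have "filter P w = w" by simp
    then show ?thesis using that(1) by simp
  qed
  moreover have "filter P u = u" using u by (intro filter_True) auto
  moreover have "filter (\<lambda>x. \<not> P x) u = []" using u by (intro filter_False) auto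
  ultimately show ?thesis by (auto simp: Shuf_def)
qed

lemma Shuf_Cons_Cons:
  assumes "P x" "\<not> P y"
  shows "Shuf P (x # xs) (y # ys) = Cons x ` Shuf P xs (y # ys) \<union> Cons y ` Shuf P (x # xs) ys"
proof
  show "Shuf P (x # xs) (y # ys) \<subseteq> Cons x ` Shuf P xs (y # ys) \<union> Cons y ` Shuf P (x # xs) ys"
  proof
    fix w assume w: "w \<in> Shuf P (x # xs) (y # ys)"
    then have "w \<noteq> []" by (auto simp: Shuf_def)
    then obtain c w' where cw: "w = c # w'" by (metis list.exhaust)
    show "w \<in> Cons x ` Shuf P xs (y # ys) \<union> Cons y ` Shuf P (x # xs) ys"
    proof (cases "P c")
      case True then show ?thesis using w cw by (auto simp: Shuf_def)
    next
      case False then show ?thesis using w cw by (auto simp: Shuf_def)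
    qed
  qed
next
  show "Cons x ` Shuf P xs (y # ys) \<union> Cons y ` Shuf P (x # xs) ys \<subseteq> Shuf P (x # xs) (y # ys)"
    using assms by (auto simp: Shuf_def)
qed

lemma finite_Shuf: "finite (Shuf P u v)"
proof -
  have "Shuf P u v \<subseteq> {w. set w \<subseteq> set u \<union> set v \<and> length w = length u + length v}"
  proof
    fix w assume "w \<in> Shuf P u v"
    then have fu: "filter P w = u" and fv: "filter (\<lambda>x. \<not> P x) w = v" by (auto simp: Shuf_def)
    have "set w = set (filter P w) \<union> set (filter (\<lambda>x. \<not> P x) w)" by auto
    then have "set w \<subseteq> set u \<union> set v" using fu fv by simp
    moreover have "length w = length u + length v"
      using sum_length_filter_compl[of P w] fu fv by simp
    ultimately show "w \<in> {w. set w \<subseteq> set u \<union> set v \<and> length w = length u + length v}"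
      by simp
  qed
  then show ?thesis by (rule finite_subset) (simp add: finite_lists_length_eq)
qed

lemma Shuf_card:
  "set u \<subseteq> {x. P x} \<Longrightarrow> set v \<subseteq> {x. \<not> P x} \<Longrightarrow> card (Shuf P u v) = (length u + length v) choose length u"
proof (induction u arbitrary: v)
  case Nil
  then show ?case
    by (cases v) (simp_all add: Shuf_Nil_Nil Shuf_Nil_left)
next
  case (Cons x xs)
  then show ?case
  proof (induction v)
    case Nil then show ?case by (simp add: Shuf_Nil_right)
  next
    case (Cons y ys)
    have Px: "P x" and Ny: "\<not> P y" and sxs: "set xs \<subseteq> {x. P x}" and sys: "set ys \<subseteq> {x. \<not> P x}"
      using Cons.prems by auto
    have c1: "card (Shuf P xs (y # ys)) = (length xs + Suc (length ys)) choose length xs"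
      using Cons.prems(1)[OF sxs] Cons.prems(3) by simp
    have c2: "card (Shuf P (x # xs) ys) = (Suc (length xs) + length ys) choose Suc (length xs)"
      using Cons.IH[OF Cons.prems(1) Cons.prems(2) sys] by simp
    have f1: "finite (Shuf P xs (y # ys))" using finite_Shuf by simp
    have f2: "finite (Shuf P (x # xs) ys)" using finite_Shuf by simp
    have disj: "Cons x ` Shuf P xs (y # ys) \<inter> Cons y ` Shuf P (x # xs) ys = {}" using Px Ny by auto
    have "card (Shuf P (x # xs) (y # ys)) = card (Shuf P xs (y # ys)) + card (Shuf P (x # xs) ys)"
      unfolding Shuf_Cons_Cons[OF Px Ny]
      using card_Un_disjoint[OF finite_imageI[OF f1] finite_imageI[OF f2] disj]
      by (simp add: card_image)
    also have "\<dots> = (Suc (length xs + Suc (length ys))) choose Suc (length xs)"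
      using c1 c2 by simp
    finally show ?case by simp
  qed
qed

lemma count_pairs:
  fixes P :: "nat \<Rightarrow> bool" and AA BB :: "nat list set"
  assumes AA: "finite AA" "\<forall>u\<in>AA. length u = a \<and> set u \<subseteq> {x. P x}"
    and BB: "finite BB" "\<forall>v\<in>BB. length v = b \<and> set v \<subseteq> {x. \<not> P x}"
  shows "card {w. filter P w \<in> AA \<and> filter (\<lambda>x. \<not> P x) w \<in> BB} = ((a + b) choose a) * card AA * card BB"
proof -
  have eq: "{w. filter P w \<in> AA \<and> filter (\<lambda>x. \<not> P x) w \<in> BB} = (\<Union>uv\<in>AA \<times> BB. Shuf P (fst uv) (snd uv))"
    by (auto simp: Shuf_def)
  have "card (\<Union>uv\<in>AA \<times> BB. Shuf P (fst uv) (snd uv)) = (\<Sum>uv\<in>AA \<times> BB. card (Shuf P (fst uv) (snd uv)))"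
  proof (rule card_UN_disjoint)
    show "finite (AA \<times> BB)" using AA BB by simp
    show "\<forall>i\<in>AA \<times> BB. finite (Shuf P (fst i) (snd i))" using finite_Shuf by auto
    show "\<forall>i\<in>AA \<times> BB. \<forall>j\<in>AA \<times> BB. i \<noteq> j \<longrightarrow> Shuf P (fst i) (snd i) \<inter> Shuf P (fst j) (snd j) = {}"
      by (auto simp: Shuf_def prod_eq_iff)
  qed
  also have "\<dots> = (\<Sum>uv\<in>AA \<times> BB. (a + b) choose a)"
    using AA BB Shuf_card by (intro sum.cong) auto
  also have "\<dots> = ((a + b) choose a) * card AA * card BB"
    by (simp add: card_cartesian_product)
  finally show ?thesis using eq by simp
qed

lemma finite_Red: "finite (Red n f)"
proof -
  have "Red n f \<subseteq> {w. set w \<subseteq> {1..<n} \<and> length w = ninv n f}" by (auto simp: Red_def)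
  then show ?thesis by (rule finite_subset) (simp add: finite_lists_length_eq)
qed

lemma Sh_card:
  "card {w. inSh n P \<alpha> \<beta> w} =
     ((ninv n \<alpha> + ninv n \<beta>) choose ninv n \<alpha>)
     * card (Red n \<alpha> \<inter> {u. set u \<subseteq> {x. P x}}) * card (Red n \<beta> \<inter> {v. set v \<subseteq> {x. \<not> P x}})"
proof -
  let ?A = "Red n \<alpha> \<inter> {u. set u \<subseteq> {x. P x}}"
  let ?B = "Red n \<beta> \<inter> {v. set v \<subseteq> {x. \<not> P x}}"
  have "inSh n P \<alpha> \<beta> w \<longleftrightarrow> filter P w \<in> ?A \<and> filter (\<lambda>x. \<not> P x) w \<in> ?B" for w
  proof
    assume "inSh n P \<alpha> \<beta> w" then show "filter P w \<in> ?A \<and> filter (\<lambda>x. \<not> P x) w \<in> ?B"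
      by (auto simp: inSh_def)
  next
    assume h: "filter P w \<in> ?A \<and> filter (\<lambda>x. \<not> P x) w \<in> ?B"
    have "set w = set (filter P w) \<union> set (filter (\<lambda>x. \<not> P x) w)" by auto
    then have "set w \<subseteq> {1..<n}" using h RedD by blast
    then show "inSh n P \<alpha> \<beta> w" using h by (simp add: inSh_def)
  qed
  then have eq: "{w. inSh n P \<alpha> \<beta> w} = {w. filter P w \<in> ?A \<and> filter (\<lambda>x. \<not> P x) w \<in> ?B}" by blast
  have fA: "finite ?A" using finite_Red by blast
  have fB: "finite ?B" using finite_Red by blast
  have lA: "\<forall>u\<in>?A. length u = ninv n \<alpha> \<and> set u \<subseteq> {x. P x}" using RedD by blast
  have lB: "\<forall>v\<in>?B. length v = ninv n \<beta> \<and> set v \<subseteq> {x. \<not> P x}" using RedD by blast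
  show ?thesis unfolding eq using count_pairs[OF fA lA fB lB] .
qed

lemma finite_Sh: "finite {w. inSh n P \<alpha> \<beta> w}"
proof -
  have "{w. inSh n P \<alpha> \<beta> w} \<subseteq> {w. set w \<subseteq> {1..<n} \<and> length w = ninv n \<alpha> + ninv n \<beta>}"
  proof
    fix w assume "w \<in> {w. inSh n P \<alpha> \<beta> w}"
    then have h: "set w \<subseteq> {1..<n}" "filter P w \<in> Red n \<alpha>" "filter (\<lambda>x. \<not> P x) w \<in> Red n \<beta>"
      by (auto simp: inSh_def)
    have "length w = ninv n \<alpha> + ninv n \<beta>"
      using sum_length_filter_compl[of P w] RedD[OF h(2)] RedD[OF h(3)] by simp
    then show "w \<in> {w. set w \<subseteq> {1..<n} \<and> length w = ninv n \<alpha> + ninv n \<beta>}" using h by simp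
  qed
  then show ?thesis by (rule finite_subset) (simp add: finite_lists_length_eq)
qed

lemma sum_Red:
  "(\<Sum>f\<in>word_perm ` {w. inSh n P \<alpha> \<beta> w}. card (Red n f)) = card {w. inSh n P \<alpha> \<beta> w}"
proof -
  let ?S = "{w. inSh n P \<alpha> \<beta> w}"
  let ?T = "word_perm ` ?S"
  have eq: "?S = (\<Union>f\<in>?T. Red n f)"
  proof
    show "?S \<subseteq> (\<Union>f\<in>?T. Red n f)"
    proof
      fix w assume "w \<in> ?S"
      then have "w \<in> Red n (word_perm w)" using shuffle_main[of n P \<alpha> \<beta> w] by simp
      moreover have "word_perm w \<in> ?T" using \<open>w \<in> ?S\<close> by (rule imageI)
      ultimately show "w \<in> (\<Union>f\<in>?T. Red n f)" by (rule UN_I[rotated])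
    qed
    show "(\<Union>f\<in>?T. Red n f) \<subseteq> ?S"
    proof
      fix y assume "y \<in> (\<Union>f\<in>?T. Red n f)"
      then obtain w where w: "w \<in> ?S" "y \<in> Red n (word_perm w)" by auto
      have "inSh n P \<alpha> \<beta> w" using w(1) by simp
      then have "\<forall>y\<in>Red n (word_perm w). inSh n P \<alpha> \<beta> y" using shuffle_main by blast
      then show "y \<in> ?S" using w(2) by simp
    qed
  qed
  have "card (\<Union>f\<in>?T. Red n f) = (\<Sum>f\<in>?T. card (Red n f))"
  proof (rule card_UN_disjoint)
    show "finite ?T" using finite_Sh by (rule finite_imageI)
    show "\<forall>i\<in>?T. finite (Red n i)" using finite_Red by simp
    show "\<forall>i\<in>?T. \<forall>j\<in>?T. i \<noteq> j \<longrightarrow> Red n i \<inter> Red n j = {}"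
    proof (intro ballI impI)
      fix i j :: "nat \<Rightarrow> nat" assume ij: "i \<noteq> j"
      show "Red n i \<inter> Red n j = {}"
      proof (rule equals0I)
        fix w assume "w \<in> Red n i \<inter> Red n j"
        then have "word_perm w = i" "word_perm w = j" using RedD by auto
        then show False using ij by simp
      qed
    qed
  qed
  moreover have "card ?S = card (\<Union>f\<in>?T. Red n f)" using eq by (rule arg_cong)
  ultimately show ?thesis by linarith
qed



definition bet :: "nat \<Rightarrow> nat \<Rightarrow> nat \<Rightarrow> nat" where
  "bet p n c = (if p \<le> c \<and> c \<le> n then n + p - c else c)"

definition shift1 :: "(nat \<Rightarrow> nat) \<Rightarrow> nat \<Rightarrow> nat" where
  "shift1 g c = (if c \<le> 1 then c else Suc (g (c - 1)))"

definition cyc :: "nat \<Rightarrow> nat \<Rightarrow> nat" where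
  "cyc p = word_perm (rev [1..<p])"

definition dcyc :: "nat \<Rightarrow> nat \<Rightarrow> nat \<Rightarrow> nat" where
  "dcyc p n = word_perm [p..<n]"

lemma bet_bet[simp]: "bet p n (bet p n c) = c"
  by (auto simp: bet_def)

lemma isperm_bet: "1 \<le> p \<Longrightarrow> isperm n (bet p n)"
proof -
  assume p: "1 \<le> p"
  have inj: "inj_on (bet p n) {1..n}" by (metis bet_bet inj_onI)
  have sub: "bet p n ` {1..n} \<subseteq> {1..n}" using p by (auto simp: bet_def)
  have sup: "{1..n} \<subseteq> bet p n ` {1..n}"
  proof
    fix c assume c: "c \<in> {1..n}"
    then have "bet p n c \<in> {1..n}" using sub by blast
    then show "c \<in> bet p n ` {1..n}" by (metis bet_bet imageI)
  qed
  have out: "\<forall>c. c \<notin> {1..n} \<longrightarrow> bet p n c = c" using p by (auto simp: bet_def)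
  show ?thesis unfolding isperm_def using inj sub sup out by blast
qed

lemma perm_of_rev: "perm_of (rev [1..<n+1]) = bet 1 n"
proof (rule ext)
  fix c show "perm_of (rev [1..<n+1]) c = bet 1 n c"
  proof (cases "1 \<le> c \<and> c \<le> n")
    case True
    have "rev [1..<n+1] ! (c - 1) = [1..<n+1] ! (length [1..<n+1] - Suc (c - 1))"
      using True by (intro rev_nth) auto
    also have "\<dots> = n + 1 - c" using True by (simp add: nth_upt Suc_diff_le del: upt_Suc)
    finally have "rev [1..<n+1] ! (c - 1) = n + 1 - c" .
    then show ?thesis using True by (simp add: perm_of_def bet_def)
  next
    case False then show ?thesis by (auto simp: perm_of_def bet_def)
  qed
qed

lemma cyc_apply: "1 \<le> p \<Longrightarrow> cyc p c = (if c = 1 then p else if 2 \<le> c \<and> c \<le> p then c - 1 else c)"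
proof (induction p arbitrary: c rule: nat_induct_at_least)
  case base then show ?case by (simp add: cyc_def)
next
  case (Suc p)
  have "rev [1..<Suc p] = p # rev [1..<p]" using Suc.hyps by (simp add: upt_Suc_append)
  then have "cyc (Suc p) c = adj p (cyc p c)" by (simp add: cyc_def)
  then show ?case using Suc by (auto simp: adj_def)
qed

lemma dcyc_apply: "p \<le> n \<Longrightarrow> dcyc p n c = (if c = n then p else if p \<le> c \<and> c < n then Suc c else c)"
proof (induction n arbitrary: c rule: nat_induct_at_least)
  case base then show ?case by (simp add: dcyc_def)
next
  case (Suc n)
  have "[p..<Suc n] = [p..<n] @ [n]" using Suc.hyps by simp
  then have "dcyc p (Suc n) c = dcyc p n (adj n c)" by (simp add: dcyc_def)
  then show ?case using Suc by (auto simp: adj_def)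
qed

lemma adj_Suc: "adj (Suc i) (Suc v) = Suc (adj i v)"
  by (simp add: adj_def)

lemma word_perm_map_Suc: "\<forall>x\<in>set z. 1 \<le> x \<Longrightarrow> word_perm (map Suc z) = shift1 (word_perm z)"
proof (induction z)
  case Nil then show ?case by (auto simp: shift1_def)
next
  case (Cons i z)
  then have i: "1 \<le> i" and IH: "word_perm (map Suc z) = shift1 (word_perm z)" by auto
  show ?case
  proof (rule ext)
    fix c
    show "word_perm (map Suc (i # z)) c = shift1 (word_perm (i # z)) c"
    proof (cases "c \<le> 1")
      case True then show ?thesis using IH i by (auto simp: shift1_def adj_def)
    next
      case False
      then have "word_perm (map Suc z) c = Suc (word_perm z (c - 1))" using IH by (simp add: shift1_def)
      then show ?thesis using False by (simp add: shift1_def adj_Suc)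
    qed
  qed
qed

lemma word_perm_zero: "\<forall>x\<in>set z. 1 \<le> x \<Longrightarrow> word_perm z 0 = 0"
  by (induction z) (auto simp: adj_def)

lemma shift1_inj:
  assumes "shift1 f = shift1 g" "f 0 = g 0"
  shows "f = g"
proof (rule ext)
  fix c show "f c = g c"
  proof (cases c)
    case 0 then show ?thesis using assms by simp
  next
    case (Suc d)
    have "shift1 f (Suc (Suc d)) = shift1 g (Suc (Suc d))" using assms by simp
    then show ?thesis using Suc by (simp add: shift1_def)
  qed
qed

lemma isperm_shift1: "isperm m g \<Longrightarrow> isperm (Suc m) (shift1 g)"
proof -
  assume g: "isperm m g"
  obtain y where y: "set y \<subseteq> {1..<m}" "word_perm y = g" using exists_reduced[OF g] by blast
  have "set (map Suc y) \<subseteq> {1..<Suc m}" using y by auto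
  moreover have "\<forall>x\<in>set y. 1 \<le> x" using y by auto
  then have "word_perm (map Suc y) = shift1 g" using word_perm_map_Suc[of y] y by auto
  ultimately show ?thesis using isperm_word_perm by metis
qed

lemma ninv_shift1:
  assumes g: "isperm m g"
  shows "ninv (Suc m) (shift1 g) = ninv m g"
proof -
  have "inv_set (Suc m) (shift1 g) = (\<lambda>(a,b). (Suc a, Suc b)) ` inv_set m g"
  proof (rule set_eqI)
    fix x :: "nat \<times> nat"
    obtain a b where x: "x = (a,b)" by fastforce
    show "x \<in> inv_set (Suc m) (shift1 g) \<longleftrightarrow> x \<in> (\<lambda>(a,b). (Suc a, Suc b)) ` inv_set m g"
    proof
      assume "x \<in> inv_set (Suc m) (shift1 g)"
      then have h: "1 \<le> a" "a < b" "b \<le> Suc m" "shift1 g b < shift1 g a" using x by (auto simp: inv_set_def)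
      then have a2: "2 \<le> a" by (auto simp: shift1_def split: if_splits)
      then have "(a - 1, b - 1) \<in> inv_set m g" using h by (auto simp: inv_set_def shift1_def)
      moreover have "x = (Suc (a - 1), Suc (b - 1))" using x a2 h by auto
      ultimately show "x \<in> (\<lambda>(a,b). (Suc a, Suc b)) ` inv_set m g" by force
    next
      assume "x \<in> (\<lambda>(a,b). (Suc a, Suc b)) ` inv_set m g"
      then obtain a' b' where "x = (Suc a', Suc b')" "(a', b') \<in> inv_set m g" by auto
      then show "x \<in> inv_set (Suc m) (shift1 g)" by (auto simp: inv_set_def shift1_def)
    qed
  qed
  moreover have "inj_on (\<lambda>(a,b). (Suc a, Suc b)) (inv_set m g)" by (auto simp: inj_on_def)
  ultimately show ?thesis unfolding ninv_def by (simp add: card_image)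
qed

lemma ninv_mono:
  assumes g: "isperm m g" and mn: "m \<le> N"
  shows "ninv N g = ninv m g"
proof -
  have "inv_set N g = inv_set m g"
  proof (rule set_eqI)
    fix x :: "nat \<times> nat"
    obtain a b where x: "x = (a,b)" by fastforce
    show "x \<in> inv_set N g \<longleftrightarrow> x \<in> inv_set m g"
    proof
      assume "x \<in> inv_set N g"
      then have h: "1 \<le> a" "a < b" "b \<le> N" "g b < g a" using x by (auto simp: inv_set_def)
      have "b \<le> m"
      proof (rule ccontr)
        assume "\<not> b \<le> m"
        then have gb: "g b = b" using isperm_out[OF g] by simp
        show False
        proof (cases "a \<le> m")
          case True then show False using isperm_range[OF g, of a] h gb \<open>\<not> b \<le> m\<close> by simp
        next
          case False then show False using isperm_out[OF g, of a] h gb by simp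
        qed
      qed
      then show "x \<in> inv_set m g" using h x by (simp add: inv_set_def)
    next
      assume "x \<in> inv_set m g" then show "x \<in> inv_set N g" using x mn by (auto simp: inv_set_def)
    qed
  qed
  then show ?thesis by (simp add: ninv_def)
qed



lemma isperm_cyc: "p \<le> N \<Longrightarrow> isperm N (cyc p)"
  unfolding cyc_def by (rule isperm_word_perm) auto

lemma isperm_dcyc: "1 \<le> p \<Longrightarrow> isperm N (dcyc p N)"
  unfolding dcyc_def by (rule isperm_word_perm) auto

lemma cyc_Suc: "1 \<le> p \<Longrightarrow> cyc (Suc p) = adj p \<circ> cyc p"
proof -
  assume "1 \<le> p"
  then have "rev [1..<Suc p] = p # rev [1..<p]" by (simp add: upt_Suc_append)
  then show ?thesis by (simp add: cyc_def)
qed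

lemma cyc_one: "cyc 1 = id" by (simp add: cyc_def)

lemma ninv_cyc:
  assumes h: "isperm (Suc m) h" and h1: "h 1 = 1" and p: "1 \<le> p" "p \<le> Suc m"
  shows "ninv (Suc m) (cyc p \<circ> h) = p - 1 + ninv (Suc m) h"
  using p
proof (induction p rule: nat_induct_at_least)
  case base
  have "cyc 1 \<circ> h = h" by (simp add: cyc_def)
  then show ?case by simp
next
  case (Suc p)
  define H where "H = cyc p \<circ> h"
  have H: "isperm (Suc m) H" unfolding H_def using isperm_comp[OF isperm_cyc h] Suc by simp
  have H1: "H 1 = p" unfolding H_def using h1 cyc_apply[OF Suc.hyps] by simp
  obtain b where b: "1 \<le> b" "b \<le> Suc m" "H b = Suc p" using isperm_surj[OF H, of "Suc p"] Suc by auto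
  have "b \<noteq> 1" using H1 b by auto
  then have n1: "ninv (Suc m) (adj p \<circ> H) = Suc (ninv (Suc m) H)"
    using ninv_left[OF H, of p 1 b] Suc b H1 by simp
  have e: "cyc (Suc p) \<circ> h = adj p \<circ> H" unfolding H_def using cyc_Suc[OF Suc.hyps] by (simp add: comp_assoc)
  have n2: "ninv (Suc m) H = p - 1 + ninv (Suc m) h" unfolding H_def using Suc.IH Suc.prems by (metis Suc_leD)
  have "ninv (Suc m) (cyc (Suc p) \<circ> h) = Suc (ninv (Suc m) H)" unfolding e by (rule n1)
  then show ?case using n2 Suc.hyps by linarith
qed

lemma dcyc_Suc: "p < N \<Longrightarrow> dcyc p N = adj p \<circ> dcyc (Suc p) N"
  by (simp add: dcyc_def upt_conv_Cons)

lemma ninv_dcyc: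
  assumes h: "isperm N h" and hN: "h N = N" and p: "1 \<le> p" "p \<le> N"
  shows "ninv N (dcyc p N \<circ> h) = N - p + ninv N h"
  using p
proof (induction "N - p" arbitrary: p)
  case 0
  then have "p = N" by simp
  then show ?case by (simp add: dcyc_def)
next
  case (Suc k)
  then have pN: "p < N" by simp
  define H where "H = dcyc (Suc p) N \<circ> h"
  have H: "isperm N H" unfolding H_def using isperm_comp[OF isperm_dcyc h] by simp
  have HN: "H N = Suc p" unfolding H_def using hN dcyc_apply[of "Suc p" N N] pN by simp
  obtain a where a: "1 \<le> a" "a \<le> N" "H a = p" using isperm_surj[OF H, of p] Suc.prems pN by auto
  have "a \<noteq> N" using HN a by auto
  then have "ninv N (adj p \<circ> H) = Suc (ninv N H)"
    using ninv_left[OF H, of p a N] Suc.prems pN a HN by simp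
  moreover have "dcyc p N \<circ> h = adj p \<circ> H" unfolding H_def using dcyc_Suc[OF pN] by (simp add: comp_assoc)
  moreover have "ninv N H = N - Suc p + ninv N h" unfolding H_def using Suc pN by simp
  ultimately show ?case using pN by simp
qed

lemma perm_fun_cancel:
  assumes "isperm N c" "c \<circ> f = c \<circ> g"
  shows "f = g"
proof (rule ext)
  fix x have "c (f x) = c (g x)" using assms(2) by (metis comp_apply)
  then show "f x = g x" using isperm_inj[OF assms(1)] by blast
qed

lemma FrontRed:
  assumes g: "isperm m g" and p: "1 \<le> p" "p \<le> Suc m" and y: "set y \<subseteq> {1..<m}"
  shows "rev [1..<p] @ map Suc y \<in> Red (Suc m) (cyc p \<circ> shift1 g) \<longleftrightarrow> y \<in> Red m g"
proof -
  have y1: "\<forall>x\<in>set y. 1 \<le> x" using y by auto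
  have wp: "word_perm (rev [1..<p] @ map Suc y) = cyc p \<circ> shift1 (word_perm y)"
    using word_perm_map_Suc[OF y1] by (simp add: cyc_def)
  have sg: "isperm (Suc m) (shift1 g)" using isperm_shift1[OF g] .
  have nv: "ninv (Suc m) (cyc p \<circ> shift1 g) = p - 1 + ninv m g"
    using ninv_cyc[OF sg _ p] ninv_shift1[OF g] by (simp add: shift1_def)
  have len: "length (rev [1..<p] @ map Suc y) = p - 1 + length y" by simp
  have st: "set (rev [1..<p] @ map Suc y) \<subseteq> {1..<Suc m}" using y p by auto
  show ?thesis
  proof
    assume h: "rev [1..<p] @ map Suc y \<in> Red (Suc m) (cyc p \<circ> shift1 g)"
    then have "cyc p \<circ> shift1 (word_perm y) = cyc p \<circ> shift1 g" using RedD wp by metis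
    then have "shift1 (word_perm y) = shift1 g" using perm_fun_cancel[OF isperm_cyc[OF p(2)]] by blast
    moreover have "word_perm y 0 = g 0" using word_perm_zero[OF y1] isperm_out[OF g, of 0] by simp
    ultimately have "word_perm y = g" by (rule shift1_inj)
    moreover have "length y = ninv m g" using RedD[OF h] nv len by simp
    ultimately show "y \<in> Red m g" using y by (simp add: Red_def)
  next
    assume h: "y \<in> Red m g"
    then show "rev [1..<p] @ map Suc y \<in> Red (Suc m) (cyc p \<circ> shift1 g)"
      using RedD[OF h] wp nv len st by (simp add: Red_def)
  qed
qed

lemma MapRed:
  assumes g: "isperm m g" and y: "set y \<subseteq> {1..<m}"
  shows "map Suc y \<in> Red (Suc m) (shift1 g) \<longleftrightarrow> y \<in> Red m g"
proof -
  have e: "cyc 1 \<circ> shift1 g = shift1 g" by (simp add: cyc_def)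
  show ?thesis using FrontRed[OF g _ _ y, of 1] unfolding e by simp
qed

lemma Red_mono:
  assumes g: "isperm m g" and y: "set y \<subseteq> {1..<m}" and mN: "m \<le> N"
  shows "y \<in> Red N g \<longleftrightarrow> y \<in> Red m g"
  using ninv_mono[OF g mN] y mN by (auto simp: Red_def)

lemma BackRed:
  assumes g: "isperm m g" and p: "1 \<le> p" "p \<le> Suc m" and y: "set y \<subseteq> {1..<m}"
  shows "[p..<Suc m] @ y \<in> Red (Suc m) (dcyc p (Suc m) \<circ> g) \<longleftrightarrow> y \<in> Red m g"
proof -
  have g': "isperm (Suc m) g" using isperm_mono_n[OF g] by simp
  have gN: "g (Suc m) = Suc m" using isperm_out[OF g] by simp
  have wp: "word_perm ([p..<Suc m] @ y) = dcyc p (Suc m) \<circ> word_perm y" by (simp add: dcyc_def)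
  have nv: "ninv (Suc m) (dcyc p (Suc m) \<circ> g) = Suc m - p + ninv m g"
    using ninv_dcyc[OF g' gN p] ninv_mono[OF g, of "Suc m"] by simp
  have len: "length ([p..<Suc m] @ y) = Suc m - p + length y" by (simp del: upt_Suc)
  have st: "set ([p..<Suc m] @ y) \<subseteq> {1..<Suc m}" using y p by auto
  show ?thesis
  proof
    assume h: "[p..<Suc m] @ y \<in> Red (Suc m) (dcyc p (Suc m) \<circ> g)"
    from RedD[OF h] have e1: "word_perm ([p..<Suc m] @ y) = dcyc p (Suc m) \<circ> g" by blast
    then have "dcyc p (Suc m) \<circ> word_perm y = dcyc p (Suc m) \<circ> g" unfolding wp .
    then have "word_perm y = g" using perm_fun_cancel[OF isperm_dcyc[OF p(1)]] by blast
    moreover have "length y = ninv m g" using RedD[OF h] nv len by simp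
    ultimately show "y \<in> Red m g" using y by (simp add: Red_def)
  next
    assume h: "y \<in> Red m g"
    then show "[p..<Suc m] @ y \<in> Red (Suc m) (dcyc p (Suc m) \<circ> g)"
      using RedD[OF h] wp nv len st by (simp add: Red_def)
  qed
qed

definition T :: "nat \<Rightarrow> nat \<Rightarrow> (nat \<Rightarrow> nat) set" where
  "T p n = word_perm ` {w. inSh n (\<lambda>x. x < p) (bet 1 p) (bet p n) w}"

lemma rel_front_L: "1 \<le> p \<Longrightarrow> bet 1 p = cyc p \<circ> shift1 (bet 1 (p - 1))"
proof (rule ext)
  fix c assume p: "1 \<le> p"
  show "bet 1 p c = (cyc p \<circ> shift1 (bet 1 (p - 1))) c"
    using p by (auto simp: cyc_apply bet_def shift1_def)
qed

lemma rel_front_R: "2 \<le> p \<Longrightarrow> bet p (Suc m) = shift1 (bet (p - 1) m)"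
proof (rule ext)
  fix c assume p: "2 \<le> p"
  show "bet p (Suc m) c = shift1 (bet (p - 1) m) c"
    using p by (auto simp: bet_def shift1_def)
qed

lemma rel_back_R: "1 \<le> p \<Longrightarrow> p \<le> m \<Longrightarrow> bet p (Suc m) = dcyc p (Suc m) \<circ> bet p m"
proof (rule ext)
  fix c assume p: "1 \<le> p" "p \<le> m"
  show "bet p (Suc m) c = (dcyc p (Suc m) \<circ> bet p m) c"
    using p by (auto simp: dcyc_apply bet_def)
qed



lemma filter_front_L:
  assumes "1 \<le> p"
  shows "filter (\<lambda>x. x < p) (rev [1..<p] @ map Suc z) = rev [1..<p] @ map Suc (filter (\<lambda>x. x < p - 1) z)"
proof -
  have "filter (\<lambda>x. x < p) (rev [1..<p]) = rev [1..<p]" by (rule filter_True) auto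
  moreover have "filter (\<lambda>x. x < p) (map Suc z) = map Suc (filter (\<lambda>x. x < p - 1) z)"
    using assms by (simp add: filter_map comp_def) (rule filter_cong, auto)
  ultimately show ?thesis by simp
qed

lemma filter_front_R:
  assumes "1 \<le> p"
  shows "filter (\<lambda>x. \<not> x < p) (rev [1..<p] @ map Suc z) = map Suc (filter (\<lambda>x. \<not> x < p - 1) z)"
proof -
  have "filter (\<lambda>x. \<not> x < p) (rev [1..<p]) = []" by (rule filter_False) auto
  moreover have "filter (\<lambda>x. \<not> x < p) (map Suc z) = map Suc (filter (\<lambda>x. \<not> x < p - 1) z)"
    using assms by (simp add: filter_map comp_def) (rule filter_cong, auto)
  ultimately show ?thesis by simp
qed

lemma front_inSh:
  assumes p: "2 \<le> p" "p \<le> m" and z: "set z \<subseteq> {1..<m}"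
  shows "inSh (Suc m) (\<lambda>x. x < p) (bet 1 p) (bet p (Suc m)) (rev [1..<p] @ map Suc z)
     \<longleftrightarrow> inSh m (\<lambda>x. x < p - 1) (bet 1 (p - 1)) (bet (p - 1) m) z"
proof -
  have p1: "1 \<le> p" using p by simp
  have st: "set (rev [1..<p] @ map Suc z) \<subseteq> {1..<Suc m}" using p z by auto
  have sL: "set (filter (\<lambda>x. x < p - 1) z) \<subseteq> {1..<m}" using z by auto
  have sR: "set (filter (\<lambda>x. \<not> x < p - 1) z) \<subseteq> {1..<m}" using z by auto
  have gL: "isperm m (bet 1 (p - 1))" using isperm_mono_n[OF isperm_bet[of 1 "p - 1"]] p by simp
  have gR: "isperm m (bet (p - 1) m)" using isperm_bet[of "p - 1" m] p by simp
  have eL: "rev [1..<p] @ map Suc (filter (\<lambda>x. x < p - 1) z) \<in> Red (Suc m) (bet 1 p)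
      \<longleftrightarrow> filter (\<lambda>x. x < p - 1) z \<in> Red m (bet 1 (p - 1))"
    using FrontRed[OF gL p1 _ sL] p rel_front_L[OF p1] by simp
  have eR: "map Suc (filter (\<lambda>x. \<not> x < p - 1) z) \<in> Red (Suc m) (bet p (Suc m))
      \<longleftrightarrow> filter (\<lambda>x. \<not> x < p - 1) z \<in> Red m (bet (p - 1) m)"
    using MapRed[OF gR sR] rel_front_R[OF p(1), of m] by simp
  show ?thesis
    unfolding inSh_def filter_front_L[OF p1] filter_front_R[OF p1] using st z eL eR by blast
qed

lemma Front:
  assumes p: "2 \<le> p" "p \<le> m" and \<sigma>: "isperm m \<sigma>"
  shows "cyc p \<circ> shift1 \<sigma> \<in> T p (Suc m) \<longleftrightarrow> \<sigma> \<in> T (p - 1) m"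
proof
  assume "\<sigma> \<in> T (p - 1) m"
  then obtain z where z: "inSh m (\<lambda>x. x < p - 1) (bet 1 (p - 1)) (bet (p - 1) m) z" "word_perm z = \<sigma>"
    unfolding T_def by blast
  have sz: "set z \<subseteq> {1..<m}" using z(1) by (simp add: inSh_def)
  have "inSh (Suc m) (\<lambda>x. x < p) (bet 1 p) (bet p (Suc m)) (rev [1..<p] @ map Suc z)"
    using front_inSh[OF p sz] z(1) by simp
  moreover have "word_perm (rev [1..<p] @ map Suc z) = cyc p \<circ> shift1 \<sigma>"
  proof -
    have "\<forall>x\<in>set z. 1 \<le> x" using sz by auto
    then have "word_perm (map Suc z) = shift1 \<sigma>" using word_perm_map_Suc[of z] z(2) by simp
    then show ?thesis by (simp add: cyc_def)
  qed
  ultimately show "cyc p \<circ> shift1 \<sigma> \<in> T p (Suc m)" unfolding T_def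
    by (intro image_eqI[where x = "rev [1..<p] @ map Suc z"]) simp_all
next
  assume "cyc p \<circ> shift1 \<sigma> \<in> T p (Suc m)"
  then obtain w where w: "inSh (Suc m) (\<lambda>x. x < p) (bet 1 p) (bet p (Suc m)) w" "word_perm w = cyc p \<circ> shift1 \<sigma>"
    unfolding T_def by (auto elim!: imageE)
  obtain z where z: "z \<in> Red m \<sigma>" using Red_nonempty[OF \<sigma>] by blast
  have sz: "set z \<subseteq> {1..<m}" using RedD[OF z] by simp
  have "rev [1..<p] @ map Suc z \<in> Red (Suc m) (cyc p \<circ> shift1 \<sigma>)"
    using FrontRed[OF \<sigma> _ _ sz, of p] p z by simp
  then have "inSh (Suc m) (\<lambda>x. x < p) (bet 1 p) (bet p (Suc m)) (rev [1..<p] @ map Suc z)"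
    using shuffle_main[OF w(1)] unfolding w(2) by blast
  then have "inSh m (\<lambda>x. x < p - 1) (bet 1 (p - 1)) (bet (p - 1) m) z" using front_inSh[OF p sz] by simp
  moreover have "word_perm z = \<sigma>" using RedD[OF z] by simp
  ultimately show "\<sigma> \<in> T (p - 1) m" unfolding T_def by blast
qed

lemma back_inSh:
  assumes p: "1 \<le> p" "p \<le> m" and z: "set z \<subseteq> {1..<m}"
  shows "inSh (Suc m) (\<lambda>x. x < p) (bet 1 p) (bet p (Suc m)) ([p..<Suc m] @ z)
     \<longleftrightarrow> inSh m (\<lambda>x. x < p) (bet 1 p) (bet p m) z"
proof -
  have fL: "filter (\<lambda>x. x < p) ([p..<Suc m] @ z) = filter (\<lambda>x. x < p) z"
  proof -
    have "filter (\<lambda>x. x < p) [p..<Suc m] = []" by (rule filter_False) auto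
    then show ?thesis by simp
  qed
  have fR: "filter (\<lambda>x. \<not> x < p) ([p..<Suc m] @ z) = [p..<Suc m] @ filter (\<lambda>x. \<not> x < p) z"
  proof -
    have "filter (\<lambda>x. \<not> x < p) [p..<Suc m] = [p..<Suc m]" by (rule filter_True) auto
    then show ?thesis by simp
  qed
  have st: "set ([p..<Suc m] @ z) \<subseteq> {1..<Suc m}" using p z by auto
  have sL: "set (filter (\<lambda>x. x < p) z) \<subseteq> {1..<m}" using z by auto
  have sR: "set (filter (\<lambda>x. \<not> x < p) z) \<subseteq> {1..<m}" using z by auto
  have gL: "isperm m (bet 1 p)" using isperm_mono_n[OF isperm_bet[of 1 p]] p by simp
  have gR: "isperm m (bet p m)" using isperm_bet[of p m] p by simp
  have eL: "filter (\<lambda>x. x < p) z \<in> Red (Suc m) (bet 1 p) \<longleftrightarrow> filter (\<lambda>x. x < p) z \<in> Red m (bet 1 p)"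
    using Red_mono[OF gL sL, of "Suc m"] by simp
  have eR: "[p..<Suc m] @ filter (\<lambda>x. \<not> x < p) z \<in> Red (Suc m) (bet p (Suc m))
      \<longleftrightarrow> filter (\<lambda>x. \<not> x < p) z \<in> Red m (bet p m)"
    using BackRed[OF gR p(1) _ sR] p rel_back_R[OF p] by simp
  show ?thesis
    unfolding inSh_def fL fR using st z eL eR by blast
qed

lemma Back:
  assumes p: "1 \<le> p" "p \<le> m" and \<sigma>: "isperm m \<sigma>"
  shows "dcyc p (Suc m) \<circ> \<sigma> \<in> T p (Suc m) \<longleftrightarrow> \<sigma> \<in> T p m"
proof
  assume "\<sigma> \<in> T p m"
  then obtain z where z: "inSh m (\<lambda>x. x < p) (bet 1 p) (bet p m) z" "word_perm z = \<sigma>"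
    unfolding T_def by blast
  have sz: "set z \<subseteq> {1..<m}" using z(1) by (simp add: inSh_def)
  have "inSh (Suc m) (\<lambda>x. x < p) (bet 1 p) (bet p (Suc m)) ([p..<Suc m] @ z)"
    using back_inSh[OF p sz] z(1) by simp
  moreover have "word_perm ([p..<Suc m] @ z) = dcyc p (Suc m) \<circ> \<sigma>"
    using z(2) by (simp add: dcyc_def)
  ultimately show "dcyc p (Suc m) \<circ> \<sigma> \<in> T p (Suc m)" unfolding T_def
    by (intro image_eqI[where x = "[p..<Suc m] @ z"]) simp_all
next
  assume "dcyc p (Suc m) \<circ> \<sigma> \<in> T p (Suc m)"
  then obtain w where w: "inSh (Suc m) (\<lambda>x. x < p) (bet 1 p) (bet p (Suc m)) w" "word_perm w = dcyc p (Suc m) \<circ> \<sigma>"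
    unfolding T_def by (auto elim!: imageE)
  obtain z where z: "z \<in> Red m \<sigma>" using Red_nonempty[OF \<sigma>] by blast
  have sz: "set z \<subseteq> {1..<m}" using RedD[OF z] by simp
  have "[p..<Suc m] @ z \<in> Red (Suc m) (dcyc p (Suc m) \<circ> \<sigma>)"
    using BackRed[OF \<sigma> p(1) _ sz] p z by simp
  then have "inSh (Suc m) (\<lambda>x. x < p) (bet 1 p) (bet p (Suc m)) ([p..<Suc m] @ z)"
    using shuffle_main[OF w(1)] unfolding w(2) by blast
  then have "inSh m (\<lambda>x. x < p) (bet 1 p) (bet p m) z" using back_inSh[OF p sz] by simp
  moreover have "word_perm z = \<sigma>" using RedD[OF z] by simp
  ultimately show "\<sigma> \<in> T p m" unfolding T_def by blast
qed



lemma word_perm_rev_inv: "word_perm w (word_perm (rev w) c) = c"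
proof (induction w arbitrary: c rule: rev_induct)
  case Nil then show ?case by simp
next
  case (snoc i w) then show ?case by simp
qed

lemma wp_le: "set Y \<subseteq> {1..<p} \<Longrightarrow> c \<le> p \<Longrightarrow> word_perm Y c \<le> p"
proof (induction Y)
  case Nil then show ?case by simp
next
  case (Cons i Y)
  then have "word_perm Y c \<le> p" "i < p" by auto
  then show ?case by (auto simp: adj_def)
qed

lemma wp_ge: "\<forall>x\<in>set Y. p \<le> x \<Longrightarrow> p \<le> c \<Longrightarrow> p \<le> word_perm Y c"
proof (induction Y)
  case Nil then show ?case by simp
next
  case (Cons i Y)
  then have "p \<le> word_perm Y c" "p \<le> i" by auto
  then show ?case by (auto simp: adj_def)
qed

lemma wp_fix: "\<forall>x\<in>set v. x \<noteq> p - 1 \<and> x \<noteq> p \<Longrightarrow> 1 \<le> p \<Longrightarrow> word_perm v p = p"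
proof (induction v)
  case Nil then show ?case by simp
next
  case (Cons i v)
  then have "word_perm v p = p" "i \<noteq> p - 1" "i \<noteq> p" by auto
  then show ?case using Cons.prems(2) by (auto simp: adj_def)
qed

lemma ninv_sub:
  assumes g: "isperm n g" and ys: "set ys \<subseteq> {1..<n}"
  shows "ninv n (g \<circ> word_perm ys) \<le> ninv n g + length ys"
  using ys
proof (induction ys rule: rev_induct)
  case Nil then show ?case by simp
next
  case (snoc i ys)
  then have ys': "set ys \<subseteq> {1..<n}" and i: "1 \<le> i" "i < n" by auto
  have h: "isperm n (g \<circ> word_perm ys)" using isperm_comp[OF g isperm_word_perm[OF ys']] .
  have "ninv n ((g \<circ> word_perm ys) \<circ> adj i) \<le> Suc (ninv n (g \<circ> word_perm ys))"
    using ninv_right[OF h i] by (auto split: if_splits)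
  moreover have "g \<circ> word_perm (ys @ [i]) = (g \<circ> word_perm ys) \<circ> adj i" by (simp add: comp_assoc)
  ultimately have "ninv n (g \<circ> word_perm (ys @ [i])) \<le> Suc (ninv n (g \<circ> word_perm ys))" by metis
  moreover have "length (ys @ [i]) = Suc (length ys)" by simp
  ultimately show ?case using snoc.IH[OF ys'] by linarith
qed

lemma Red_prefix:
  assumes "xs @ ys \<in> Red n f"
  shows "xs \<in> Red n (word_perm xs)"
proof -
  from RedD[OF assms] have s: "set xs \<subseteq> {1..<n}" "set ys \<subseteq> {1..<n}"
    and f: "word_perm xs \<circ> word_perm ys = f" and l: "length xs + length ys = ninv n f" by auto
  have "ninv n f \<le> ninv n (word_perm xs) + length ys"
    using ninv_sub[OF isperm_word_perm[OF s(1)] s(2)] f by simp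
  then have "length xs \<le> ninv n (word_perm xs)" using l by simp
  then show ?thesis using Red_le[OF s(1)] by simp
qed

lemma trackL:
  assumes w: "w = w1 @ [p - 1] @ w2" and w1: "\<forall>x\<in>set w1. x \<noteq> p - 1 \<and> x \<noteq> p"
    and u: "filter (\<lambda>x. x < p) w \<in> Red n \<alpha>" and p: "2 \<le> p" and sw: "set w \<subseteq> {1..<n}"
  shows "word_perm (rev w) p = word_perm (rev (filter (\<lambda>x. x < p) w)) p"
proof -
  let ?P = "\<lambda>x::nat. x < p"
  have w1': "\<forall>x\<in>set (filter ?P w1). x \<noteq> p - 1 \<and> x \<noteq> p" using w1 by auto
  have claim: "\<forall>r. w2 = y2 @ r \<longrightarrow>
      word_perm (rev (w1 @ [p - 1] @ y2)) p = word_perm (rev (filter ?P (w1 @ [p - 1] @ y2))) p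
      \<and> word_perm (rev (w1 @ [p - 1] @ y2)) p < p" for y2
  proof (induction y2 rule: rev_induct)
    case Nil
    have a: "word_perm (rev w1) p = p" using wp_fix[of "rev w1" p] w1 p by simp
    have b: "word_perm (rev (filter ?P w1)) p = p" using wp_fix[of "rev (filter ?P w1)" p] w1' p by simp
    show ?case using a b p by (simp add: adj_def)
  next
    case (snoc j y2)
    show ?case
    proof (intro allI impI)
      fix r assume r: "w2 = (y2 @ [j]) @ r"
      define W where "W = w1 @ [p - 1] @ y2"
      define Y where "Y = filter ?P W"
      define t where "t = word_perm (rev W) p"
      from snoc.IH[rule_format, of "[j] @ r"] r
      have IH: "t = word_perm (rev Y) p" "t < p" unfolding t_def Y_def W_def by auto
      have e1: "word_perm (rev (w1 @ [p - 1] @ y2 @ [j])) p = adj j t" unfolding t_def W_def by simp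
      show "word_perm (rev (w1 @ [p - 1] @ y2 @ [j])) p = word_perm (rev (filter ?P (w1 @ [p - 1] @ y2 @ [j]))) p
         \<and> word_perm (rev (w1 @ [p - 1] @ y2 @ [j])) p < p"
      proof (cases "j < p")
        case False
        then have "adj j t = t" using IH(2) by (auto simp: adj_def)
        moreover have "filter ?P (w1 @ [p - 1] @ y2 @ [j]) = Y" using False unfolding Y_def W_def by simp
        ultimately show ?thesis using e1 IH by simp
      next
        case True
        have fY: "filter ?P (w1 @ [p - 1] @ y2 @ [j]) = Y @ [j]" using True unfolding Y_def W_def by simp
        have e2: "word_perm (rev (Y @ [j])) p = adj j t" using IH by simp
        have lt: "adj j t < p"
        proof (cases "j = p - 1")
          case False
          then show ?thesis using True IH(2) by (auto simp: adj_def)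
        next
          case jp: True
          have "t \<noteq> p - 1"
          proof
            assume tp: "t = p - 1"
            have "w = (w1 @ [p - 1] @ y2 @ [j]) @ r" using w r by simp
            then have "filter ?P w = filter ?P (w1 @ [p - 1] @ y2 @ [j]) @ filter ?P r" by (simp only: filter_append)
            then have "filter ?P w = Y @ [j] @ filter ?P r" using fY by simp
            then have "(Y @ [j]) @ filter ?P r \<in> Red n \<alpha>" using u by simp
            then have "Y @ [j] \<in> Red n (word_perm (Y @ [j]))" by (rule Red_prefix)
            then have "word_perm (Y @ [j]) (Suc j) < word_perm (Y @ [j]) j" using Red_snoc_D by blast
            then have d: "word_perm Y j < word_perm Y (Suc j)" by (simp add: adj_def)
            have "word_perm Y t = p" using word_perm_rev_inv[of Y p] IH(1) by simp
            then have "p < word_perm Y p" using d jp tp p by simp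
            moreover have "set Y \<subseteq> {1..<p}" using sw w r unfolding Y_def W_def by auto
            then have "word_perm Y p \<le> p" using wp_le by blast
            ultimately show False by simp
          qed
          then show ?thesis using jp IH(2) p by (auto simp: adj_def)
        qed
        show ?thesis using e1 e2 fY lt by simp
      qed
    qed
  qed
  show ?thesis using claim[of w2] w by simp
qed

lemma trackR:
  assumes w: "w = w1 @ [p] @ w2" and w1: "\<forall>x\<in>set w1. x \<noteq> p - 1 \<and> x \<noteq> p"
    and u: "filter (\<lambda>x. \<not> x < p) w \<in> Red n \<beta>" and p: "2 \<le> p" and sw: "set w \<subseteq> {1..<n}"
  shows "word_perm (rev w) p = word_perm (rev (filter (\<lambda>x. \<not> x < p) w)) p"
proof -
  let ?P = "\<lambda>x::nat. \<not> x < p"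
  have w1': "\<forall>x\<in>set (filter ?P w1). x \<noteq> p - 1 \<and> x \<noteq> p" using w1 by auto
  have claim: "\<forall>r. w2 = y2 @ r \<longrightarrow>
      word_perm (rev (w1 @ [p] @ y2)) p = word_perm (rev (filter ?P (w1 @ [p] @ y2))) p
      \<and> p < word_perm (rev (w1 @ [p] @ y2)) p" for y2
  proof (induction y2 rule: rev_induct)
    case Nil
    have a: "word_perm (rev w1) p = p" using wp_fix[of "rev w1" p] w1 p by simp
    have b: "word_perm (rev (filter ?P w1)) p = p" using wp_fix[of "rev (filter ?P w1)" p] w1' p by simp
    show ?case using a b p by (simp add: adj_def)
  next
    case (snoc j y2)
    show ?case
    proof (intro allI impI)
      fix r assume r: "w2 = (y2 @ [j]) @ r"
      define W where "W = w1 @ [p] @ y2"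
      define Y where "Y = filter ?P W"
      define t where "t = word_perm (rev W) p"
      from snoc.IH[rule_format, of "[j] @ r"] r
      have IH: "t = word_perm (rev Y) p" "p < t" unfolding t_def Y_def W_def by auto
      have e1: "word_perm (rev (w1 @ [p] @ y2 @ [j])) p = adj j t" unfolding t_def W_def by simp
      show "word_perm (rev (w1 @ [p] @ y2 @ [j])) p = word_perm (rev (filter ?P (w1 @ [p] @ y2 @ [j]))) p
         \<and> p < word_perm (rev (w1 @ [p] @ y2 @ [j])) p"
      proof (cases "j < p")
        case True
        then have "adj j t = t" using IH(2) by (auto simp: adj_def)
        moreover have "filter ?P (w1 @ [p] @ y2 @ [j]) = Y" using True unfolding Y_def W_def by simp
        ultimately show ?thesis using e1 IH by simp
      next
        case False
        have fY: "filter ?P (w1 @ [p] @ y2 @ [j]) = Y @ [j]" using False unfolding Y_def W_def by simp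
        have e2: "word_perm (rev (Y @ [j])) p = adj j t" using IH by simp
        have lt: "p < adj j t"
        proof (cases "j = p")
          case False
          then show ?thesis using \<open>\<not> j < p\<close> IH(2) by (auto simp: adj_def)
        next
          case jp: True
          have "t \<noteq> Suc p"
          proof
            assume tp: "t = Suc p"
            have "w = (w1 @ [p] @ y2 @ [j]) @ r" using w r by simp
            then have "filter ?P w = filter ?P (w1 @ [p] @ y2 @ [j]) @ filter ?P r" by (simp only: filter_append)
            then have "filter ?P w = Y @ [j] @ filter ?P r" using fY by simp
            then have "(Y @ [j]) @ filter ?P r \<in> Red n \<beta>" using u by simp
            then have "Y @ [j] \<in> Red n (word_perm (Y @ [j]))" by (rule Red_prefix)
            then have "word_perm (Y @ [j]) (Suc j) < word_perm (Y @ [j]) j" using Red_snoc_D by blast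
            then have d: "word_perm Y j < word_perm Y (Suc j)" by (simp add: adj_def)
            have "word_perm Y t = p" using word_perm_rev_inv[of Y p] IH(1) by simp
            then have "word_perm Y p < p" using d jp tp by simp
            moreover have "\<forall>x\<in>set Y. p \<le> x" unfolding Y_def by auto
            then have "p \<le> word_perm Y p" using wp_ge by blast
            ultimately show False by simp
          qed
          then show ?thesis using jp IH(2) by (auto simp: adj_def)
        qed
        show ?thesis using e1 e2 fY lt by simp
      qed
    qed
  qed
  show ?thesis using claim[of w2] w by simp
qed

lemma endpoint:
  assumes f: "f \<in> T p n" and p: "1 < p" "p < n"
  shows "f 1 = p \<or> f n = p"
proof -
  obtain w where sh: "inSh n (\<lambda>x. x < p) (bet 1 p) (bet p n) w" and fw: "word_perm w = f"
    using f unfolding T_def by (auto elim!: imageE)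
  have sw: "set w \<subseteq> {1..<n}" and uL: "filter (\<lambda>x. x < p) w \<in> Red n (bet 1 p)"
    and uR: "filter (\<lambda>x. \<not> x < p) w \<in> Red n (bet p n)" using sh by (auto simp: inSh_def)
  have p2: "2 \<le> p" using p by simp
  have key: "f (word_perm (rev w) p) = p" using word_perm_rev_inv[of w p] fw by simp
  show ?thesis
  proof (cases "\<exists>x\<in>set w. x = p - 1 \<or> x = p")
    case False
    have "word_perm (rev (filter (\<lambda>x. x < p) w)) p = p"
      using wp_fix[of "rev (filter (\<lambda>x. x < p) w)" p] False p by auto
    moreover have "bet 1 p (word_perm (rev (filter (\<lambda>x. x < p) w)) p) = p"
      using word_perm_rev_inv[of "filter (\<lambda>x. x < p) w" p] RedD[OF uL] by simp
    ultimately have "bet 1 p p = p" by simp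
    then show ?thesis using p by (simp add: bet_def)
  next
    case True
    then obtain w1 x w2 where split: "w = w1 @ x # w2" "x = p - 1 \<or> x = p" "\<forall>y\<in>set w1. \<not> (y = p - 1 \<or> y = p)"
      using split_list_first_prop[of w "\<lambda>x. x = p - 1 \<or> x = p"] by blast
    have w1: "\<forall>y\<in>set w1. y \<noteq> p - 1 \<and> y \<noteq> p" using split(3) by blast
    show ?thesis
    proof (cases "x = p - 1")
      case True
      have "word_perm (rev w) p = word_perm (rev (filter (\<lambda>x. x < p) w)) p"
        using trackL[of w w1 p w2 n "bet 1 p"] split(1) True w1 uL p2 sw by simp
      moreover have "bet 1 p (word_perm (rev (filter (\<lambda>x. x < p) w)) p) = p"
        using word_perm_rev_inv[of "filter (\<lambda>x. x < p) w" p] RedD[OF uL] by simp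
      then have "word_perm (rev (filter (\<lambda>x. x < p) w)) p = 1"
        using p by (auto simp: bet_def split: if_splits)
      ultimately show ?thesis using key by simp
    next
      case False
      then have xp: "x = p" using split(2) by simp
      have "word_perm (rev w) p = word_perm (rev (filter (\<lambda>x. \<not> x < p) w)) p"
        using trackR[of w w1 p w2 n "bet p n"] split(1) xp w1 uR p2 sw by simp
      moreover have "bet p n (word_perm (rev (filter (\<lambda>x. \<not> x < p) w)) p) = p"
        using word_perm_rev_inv[of "filter (\<lambda>x. \<not> x < p) w" p] RedD[OF uR] by simp
      then have "word_perm (rev (filter (\<lambda>x. \<not> x < p) w)) p = n"
        using p by (auto simp: bet_def split: if_splits)
      ultimately show ?thesis using key by simp
    qed
  qed
qed



lemma perms_isperm:
  assumes "xs \<in> perms n"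
  shows "isperm n (perm_of xs)"
proof -
  from assms have l: "length xs = n" and d: "distinct xs" and s: "set xs = {1..n}" by (auto simp: perms_def)
  have inj: "inj_on (perm_of xs) {1..n}"
  proof (rule inj_onI)
    fix a b assume a: "a \<in> {1..n}" and b: "b \<in> {1..n}" and e: "perm_of xs a = perm_of xs b"
    then have "xs ! (a - 1) = xs ! (b - 1)" using l by (simp add: perm_of_def)
    moreover have "a - 1 < length xs" "b - 1 < length xs" using a b l by auto
    ultimately have "a - 1 = b - 1" using d nth_eq_iff_index_eq by blast
    then show "a = b" using a b by (simp only: atLeastAtMost_iff) arith
  qed
  have img: "perm_of xs ` {1..n} = {1..n}"
  proof
    show "perm_of xs ` {1..n} \<subseteq> {1..n}"
    proof
      fix y assume "y \<in> perm_of xs ` {1..n}"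
      then obtain a where a: "a \<in> {1..n}" "y = perm_of xs a" by blast
      then have "y = xs ! (a - 1)" using l by (simp add: perm_of_def)
      then have "y \<in> set xs" using a l by auto
      then show "y \<in> {1..n}" using s by simp
    qed
    show "{1..n} \<subseteq> perm_of xs ` {1..n}"
    proof
      fix y assume "y \<in> {1..n}"
      then have "y \<in> set xs" using s by simp
      then obtain k where k: "k < n" "xs ! k = y" using l by (auto simp: in_set_conv_nth)
      then have "perm_of xs (Suc k) = y" using l by (simp add: perm_of_def)
      then show "y \<in> perm_of xs ` {1..n}" using k by force
    qed
  qed
  have out: "\<forall>c. c \<notin> {1..n} \<longrightarrow> perm_of xs c = c" using l by (auto simp: perm_of_def)
  show ?thesis unfolding isperm_def using inj img out by blast
qed

lemma perm_of_inj:
  assumes "xs \<in> perms n" "ys \<in> perms n" "perm_of xs = perm_of ys"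
  shows "xs = ys"
proof (rule nth_equalityI)
  show "length xs = length ys" using assms by (simp add: perms_def)
  fix k assume "k < length xs"
  then have e1: "perm_of xs (Suc k) = xs ! k" by (simp add: perm_of_def)
  have "length ys = length xs" using assms by (simp add: perms_def)
  then have e2: "perm_of ys (Suc k) = ys ! k" using \<open>k < length xs\<close> by (simp add: perm_of_def)
  show "xs ! k = ys ! k" using e1 e2 assms(3) by metis
qed

lemma list_of_perm:
  assumes f: "isperm n f"
  shows "map f [1..<n+1] \<in> perms n \<and> perm_of (map f [1..<n+1]) = f"
proof
  have inj: "inj_on f {1..n}" and im: "f ` {1..n} = {1..n}" using f by (auto simp: isperm_def)
  have su: "set [1..<n+1] = {1..n}" by auto
  have "distinct (map f [1..<n+1])" using inj su by (simp add: distinct_map del: upt_Suc)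
  moreover have "set (map f [1..<n+1]) = {1..n}" using im su by (simp del: upt_Suc)
  ultimately show "map f [1..<n+1] \<in> perms n" by (simp add: perms_def)
  show "perm_of (map f [1..<n+1]) = f"
  proof (rule ext)
    fix c show "perm_of (map f [1..<n+1]) c = f c"
    proof (cases "1 \<le> c \<and> c \<le> n")
      case True
      have lt: "c - 1 < length [1..<n+1]" using True by (simp del: upt_Suc) arith
      have "[1..<n+1] ! (c - 1) = c" using True by (simp add: nth_upt del: upt_Suc)
      then have "map f [1..<n+1] ! (c - 1) = f c" using nth_map[OF lt, of f] by simp
      moreover have "length (map f [1..<n+1]) = n" by (simp del: upt_Suc)
      ultimately show ?thesis using True by (simp add: perm_of_def del: upt_Suc)
    next
      case False then show ?thesis using isperm_out[OF f, of c] by (auto simp: perm_of_def simp del: upt_Suc)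
    qed
  qed
qed

lemma fl_formula:
  assumes s: "set ys = {1..n} - {p}" and p1: "1 \<le> p"
  shows "fl ys = map (\<lambda>v. if v < p then v else v - 1) ys"
  unfolding fl_def
proof (rule map_cong[OF refl])
  fix x assume x: "x \<in> set ys"
  then have xr: "1 \<le> x" "x \<le> n" "x \<noteq> p" using s by auto
  have e: "{y \<in> set ys. y \<le> x} = {1..x} - {p}"
  proof (rule set_eqI)
    fix y show "y \<in> {y \<in> set ys. y \<le> x} \<longleftrightarrow> y \<in> {1..x} - {p}"
      unfolding s using xr by (simp only: mem_Collect_eq Diff_iff atLeastAtMost_iff singleton_iff) linarith
  qed
  show "card {y \<in> set ys. y \<le> x} = (if x < p then x else x - 1)"
  proof (cases "x < p")
    case True
    then have "p \<notin> {1..x}" by simp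
    then have "{1..x} - {p} = {1..x}" by blast
    then show ?thesis using e True by simp
  next
    case False
    then have "p \<in> {1..x}" using xr p1 by simp
    then have "card ({1..x} - {p}) = x - 1" by (simp add: card_Diff_singleton)
    then show ?thesis using e False by simp
  qed
qed

lemma fl_perms:
  assumes s: "set ys = {1..Suc m} - {p}" and d: "distinct ys" and l: "length ys = m" and p: "1 \<le> p" "p \<le> Suc m"
  shows "fl ys \<in> perms m"
proof -
  define r where "r = (\<lambda>v::nat. if v < p then v else v - 1)"
  have fl: "fl ys = map r ys" using fl_formula[OF s p(1)] unfolding r_def .
  have inj: "inj_on r ({1..Suc m} - {p})" unfolding r_def by (rule inj_onI) (auto split: if_splits)
  have img: "r ` ({1..Suc m} - {p}) = {1..m}"
  proof
    show "r ` ({1..Suc m} - {p}) \<subseteq> {1..m}" using p unfolding r_def by auto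
    show "{1..m} \<subseteq> r ` ({1..Suc m} - {p})"
    proof
      fix c assume c: "c \<in> {1..m}"
      show "c \<in> r ` ({1..Suc m} - {p})"
      proof (cases "c < p")
        case True then have "r c = c" "c \<in> {1..Suc m} - {p}" using c unfolding r_def by auto
        then show ?thesis by (metis imageI)
      next
        case False then have "r (Suc c) = c" "Suc c \<in> {1..Suc m} - {p}" using c unfolding r_def by auto
        then show ?thesis by (metis imageI)
      qed
    qed
  qed
  have "distinct (map r ys)" using d inj s by (simp add: distinct_map)
  moreover have "set (map r ys) = {1..m}" using img s by simp
  ultimately show ?thesis using fl l by (simp add: perms_def)
qed

lemma decomp_front:
  assumes xs: "xs \<in> perms (Suc m)" and h: "hd xs = p"
  shows "fl (tl xs) \<in> perms m \<and> perm_of xs = cyc p \<circ> shift1 (perm_of (fl (tl xs)))"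
proof -
  from xs have l: "length xs = Suc m" and d: "distinct xs" and s: "set xs = {1..Suc m}" by (auto simp: perms_def)
  obtain ys where xsys: "xs = p # ys" using l h by (cases xs) auto
  have sys: "set ys = {1..Suc m} - {p}" using s d xsys by auto
  have dys: "distinct ys" "length ys = m" using d l xsys by auto
  have p: "1 \<le> p" "p \<le> Suc m" using s xsys by auto
  have fp: "fl ys \<in> perms m" using fl_perms[OF sys dys p] .
  define r where "r = (\<lambda>v::nat. if v < p then v else v - 1)"
  have fl: "fl ys = map r ys" using fl_formula[OF sys p(1)] unfolding r_def .
  define \<sigma> where "\<sigma> = perm_of (fl ys)"
  have eq: "perm_of xs = cyc p \<circ> shift1 \<sigma>"
  proof (rule ext)
    fix c
    show "perm_of xs c = (cyc p \<circ> shift1 \<sigma>) c"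
    proof (cases "c = 0")
      case True then show ?thesis using p by (simp add: perm_of_def shift1_def cyc_apply)
    next
      case c0: False
      show ?thesis
      proof (cases "c = 1")
        case True then show ?thesis using p xsys by (simp add: perm_of_def shift1_def cyc_apply)
      next
        case c1: False
        show ?thesis
        proof (cases "c \<le> Suc m")
          case True
          define v where "v = ys ! (c - 2)"
          have cr: "c - 2 < m" using True c0 c1 by simp
          have vin: "v \<in> set ys" unfolding v_def using cr dys by simp
          then have vr: "1 \<le> v" "v \<le> Suc m" "v \<noteq> p" using sys by auto
          have "perm_of xs c = v" unfolding v_def using True c0 c1 xsys l
            by (simp add: perm_of_def nth_Cons' numeral_2_eq_2)
          moreover have "\<sigma> (c - 1) = r v"
          proof -
            have cc: "1 \<le> c - 1" "c - 1 \<le> length (fl ys)" "c - 1 - 1 = c - 2"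
              using True c0 c1 fl dys by auto
            have "fl ys ! (c - 2) = r v" unfolding v_def using fl cr dys by simp
            then show ?thesis unfolding \<sigma>_def perm_of_def using cc by simp
          qed
          moreover have "cyc p (Suc (r v)) = v" using vr p unfolding r_def by (auto simp: cyc_apply)
          ultimately show ?thesis using c0 c1 by (simp add: shift1_def)
        next
          case False
          have "\<sigma> (c - 1) = c - 1" unfolding \<sigma>_def using False fl dys by (auto simp: perm_of_def)
          then show ?thesis using False p c0 c1 l by (simp add: perm_of_def shift1_def cyc_apply)
        qed
      qed
    qed
  qed
  show ?thesis using fp eq xsys unfolding \<sigma>_def by simp
qed

lemma decomp_back:
  assumes xs: "xs \<in> perms (Suc m)" and h: "last xs = p"
  shows "fl (butlast xs) \<in> perms m \<and> perm_of xs = dcyc p (Suc m) \<circ> perm_of (fl (butlast xs))"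
proof -
  from xs have l: "length xs = Suc m" and d: "distinct xs" and s: "set xs = {1..Suc m}" by (auto simp: perms_def)
  obtain ys where xsys: "xs = ys @ [p]" using l h by (metis append_butlast_last_id length_0_conv nat.distinct(1))
  have sys: "set ys = {1..Suc m} - {p}" using s d xsys by auto
  have dys: "distinct ys" "length ys = m" using d l xsys by auto
  have p: "1 \<le> p" "p \<le> Suc m" using s xsys by auto
  have fp: "fl ys \<in> perms m" using fl_perms[OF sys dys p] .
  define r where "r = (\<lambda>v::nat. if v < p then v else v - 1)"
  have fl: "fl ys = map r ys" using fl_formula[OF sys p(1)] unfolding r_def .
  define \<sigma> where "\<sigma> = perm_of (fl ys)"
  have eq: "perm_of xs = dcyc p (Suc m) \<circ> \<sigma>"
  proof (rule ext)
    fix c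
    show "perm_of xs c = (dcyc p (Suc m) \<circ> \<sigma>) c"
    proof (cases "1 \<le> c \<and> c \<le> m")
      case True
      define v where "v = ys ! (c - 1)"
      have cr: "c - 1 < m" using True by arith
      have vin: "v \<in> set ys" unfolding v_def using cr dys by simp
      then have vr: "1 \<le> v" "v \<le> Suc m" "v \<noteq> p" using sys by auto
      have "perm_of xs c = v" unfolding v_def using True xsys l dys
        by (auto simp: perm_of_def nth_append)
      moreover have "\<sigma> c = r v"
      proof -
        have "fl ys ! (c - 1) = r v" unfolding v_def using fl cr dys by simp
        then show ?thesis unfolding \<sigma>_def perm_of_def using True dys fl by simp
      qed
      moreover have "dcyc p (Suc m) (r v) = v" using vr p unfolding r_def by (auto simp: dcyc_apply)
      ultimately show ?thesis by simp
    next
      case False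
      show ?thesis
      proof (cases "c = Suc m")
        case True
        have "perm_of xs c = p" using True xsys dys by (simp add: perm_of_def nth_append)
        moreover have "\<sigma> c = c" using True dys fl unfolding \<sigma>_def by (simp add: perm_of_def)
        ultimately show ?thesis using True p by (simp add: dcyc_apply)
      next
        case cn: False
        have "\<sigma> c = c" using False dys fl unfolding \<sigma>_def by (auto simp: perm_of_def)
        moreover have "perm_of xs c = c" using False cn l by (auto simp: perm_of_def)
        moreover have "dcyc p (Suc m) c = c" using False cn p by (auto simp: dcyc_apply)
        ultimately show ?thesis by simp
      qed
    qed
  qed
  have "butlast xs = ys" using xsys by simp
  then show ?thesis using fp eq unfolding \<sigma>_def by simp
qed



declare B.simps[simp del]

lemma bet_same: "bet p p = id"
  by (rule ext) (auto simp: bet_def)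

lemma T_one: "1 \<le> n \<Longrightarrow> T 1 n = {bet 1 n}"
proof -
  assume n: "1 \<le> n"
  have eq: "inSh n (\<lambda>x. x < 1) (bet 1 1) (bet 1 n) w \<longleftrightarrow> w \<in> Red n (bet 1 n)" for w
  proof
    assume h: "inSh n (\<lambda>x. x < 1) (bet 1 1) (bet 1 n) w"
    then have "set w \<subseteq> {1..<n}" by (simp add: inSh_def)
    then have "filter (\<lambda>x. \<not> x < 1) w = w" by (intro filter_True) auto
    then show "w \<in> Red n (bet 1 n)" using h by (simp add: inSh_def)
  next
    assume h: "w \<in> Red n (bet 1 n)"
    then have s: "set w \<subseteq> {1..<n}" using RedD by blast
    then have "filter (\<lambda>x. \<not> x < 1) w = w" by (intro filter_True) auto
    moreover have "filter (\<lambda>x. x < 1) w = []" using s by (intro filter_False) auto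
    ultimately show "inSh n (\<lambda>x. x < 1) (bet 1 1) (bet 1 n) w"
      using h s Red_Nil bet_same[of 1] by (simp add: inSh_def)
  qed
  have "{w. inSh n (\<lambda>x. x < 1) (bet 1 1) (bet 1 n) w} = Red n (bet 1 n)" using eq by blast
  then have "T 1 n = word_perm ` Red n (bet 1 n)" unfolding T_def by simp
  also have "\<dots> = {bet 1 n}"
  proof
    show "word_perm ` Red n (bet 1 n) \<subseteq> {bet 1 n}" using RedD by blast
    obtain w where "w \<in> Red n (bet 1 n)" using Red_nonempty[OF isperm_bet[of 1 n]] by auto
    then show "{bet 1 n} \<subseteq> word_perm ` Red n (bet 1 n)" using RedD by (metis image_eqI singletonD subsetI)
  qed
  finally show ?thesis .
qed

lemma T_n: "1 \<le> n \<Longrightarrow> T n n = {bet 1 n}"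
proof -
  assume n: "1 \<le> n"
  have eq: "inSh n (\<lambda>x. x < n) (bet 1 n) (bet n n) w \<longleftrightarrow> w \<in> Red n (bet 1 n)" for w
  proof
    assume h: "inSh n (\<lambda>x. x < n) (bet 1 n) (bet n n) w"
    then have "set w \<subseteq> {1..<n}" by (simp add: inSh_def)
    then have "filter (\<lambda>x. x < n) w = w" by (intro filter_True) auto
    then show "w \<in> Red n (bet 1 n)" using h by (simp add: inSh_def)
  next
    assume h: "w \<in> Red n (bet 1 n)"
    then have s: "set w \<subseteq> {1..<n}" using RedD by blast
    then have "filter (\<lambda>x. x < n) w = w" by (intro filter_True) auto
    moreover have "filter (\<lambda>x. \<not> x < n) w = []" using s by (intro filter_False) auto
    ultimately show "inSh n (\<lambda>x. x < n) (bet 1 n) (bet n n) w"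
      using h s Red_Nil bet_same[of n] by (simp add: inSh_def)
  qed
  have "{w. inSh n (\<lambda>x. x < n) (bet 1 n) (bet n n) w} = Red n (bet 1 n)" using eq by blast
  then have "T n n = word_perm ` Red n (bet 1 n)" unfolding T_def by simp
  also have "\<dots> = {bet 1 n}"
  proof
    show "word_perm ` Red n (bet 1 n) \<subseteq> {bet 1 n}" using RedD by blast
    obtain w where "w \<in> Red n (bet 1 n)" using Red_nonempty[OF isperm_bet[of 1 n]] by auto
    then show "{bet 1 n} \<subseteq> word_perm ` Red n (bet 1 n)" using RedD by (metis image_eqI singletonD subsetI)
  qed
  finally show ?thesis .
qed

lemma rev_perms: "rev [1..<n+1] \<in> perms n"
  by (simp add: perms_def atLeastLessThanSuc_atLeastAtMost del: upt_Suc)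

lemma single_char: "{xs \<in> perms n. perm_of xs \<in> {bet 1 n}} = {rev [1..<n+1]}"
proof
  show "{xs \<in> perms n. perm_of xs \<in> {bet 1 n}} \<subseteq> {rev [1..<n+1]}"
    using perm_of_inj[OF _ rev_perms] perm_of_rev by force
  show "{rev [1..<n+1]} \<subseteq> {xs \<in> perms n. perm_of xs \<in> {bet 1 n}}"
    using rev_perms perm_of_rev by simp
qed

lemma T_isperm: "f \<in> T p n \<Longrightarrow> isperm n f"
  unfolding T_def inSh_def using isperm_word_perm by blast

lemma hd_perm_of: "xs \<in> perms (Suc m) \<Longrightarrow> hd xs = perm_of xs 1"
  by (cases xs) (auto simp: perms_def perm_of_def)

lemma last_perm_of: "xs \<in> perms (Suc m) \<Longrightarrow> last xs = perm_of xs (Suc m)"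
proof -
  assume "xs \<in> perms (Suc m)"
  then have l: "length xs = Suc m" by (simp add: perms_def)
  then have "last xs = xs ! m" by (metis diff_Suc_1 last_conv_nth list.size(3) nat.distinct(1))
  then show ?thesis using l by (simp add: perm_of_def)
qed

lemma B_char: "1 \<le> p \<Longrightarrow> p \<le> n \<Longrightarrow> B p n = {xs \<in> perms n. perm_of xs \<in> T p n}"
proof (induction n arbitrary: p)
  case 0 then show ?case by simp
next
  case (Suc m)
  show ?case
  proof (cases "p = 1 \<or> p = Suc m")
    case True
    then have "B p (Suc m) = {rev [1..<Suc m + 1]}"
      apply (subst B.simps)
      apply (auto simp del: upt_Suc)
      done
    moreover have "T p (Suc m) = {bet 1 (Suc m)}" using True T_one T_n by auto
    ultimately show ?thesis using single_char by simp
  next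
    case False
    then have p: "2 \<le> p" "p \<le> m" using Suc.prems by auto
    have Bd: "B p (Suc m) = {xs \<in> perms (Suc m). (hd xs = p \<and> fl (tl xs) \<in> B (p - 1) m)
        \<or> (last xs = p \<and> fl (butlast xs) \<in> B p m)}"
      apply (subst B.simps)
      using p apply (simp add: Let_def del: upt_Suc)
      done
    have IH1: "B (p - 1) m = {xs \<in> perms m. perm_of xs \<in> T (p - 1) m}" by (rule Suc.IH) (use p in auto)
    have IH2: "B p m = {xs \<in> perms m. perm_of xs \<in> T p m}" by (rule Suc.IH) (use p in auto)
    show ?thesis
    proof (rule set_eqI)
      fix xs
      show "xs \<in> B p (Suc m) \<longleftrightarrow> xs \<in> {xs \<in> perms (Suc m). perm_of xs \<in> T p (Suc m)}"
      proof (cases "xs \<in> perms (Suc m)")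
        case False then show ?thesis using Bd by simp
      next
        case xs: True
        have A: "(fl (tl xs) \<in> B (p - 1) m) \<longleftrightarrow> perm_of xs \<in> T p (Suc m)" if h: "hd xs = p"
        proof -
          from decomp_front[OF xs h] have fp: "fl (tl xs) \<in> perms m"
            and eq: "perm_of xs = cyc p \<circ> shift1 (perm_of (fl (tl xs)))" by auto
          show ?thesis using IH1 fp eq Front[OF p perms_isperm[OF fp]] by simp
        qed
        have Bk: "(fl (butlast xs) \<in> B p m) \<longleftrightarrow> perm_of xs \<in> T p (Suc m)" if h: "last xs = p"
        proof -
          from decomp_back[OF xs h] have fp: "fl (butlast xs) \<in> perms m"
            and eq: "perm_of xs = dcyc p (Suc m) \<circ> perm_of (fl (butlast xs))" by auto
          have p1: "1 \<le> p" using p by simp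
          show ?thesis using IH2 fp eq Back[OF p1 p(2) perms_isperm[OF fp]] by simp
        qed
        have E: "hd xs = p \<or> last xs = p" if "perm_of xs \<in> T p (Suc m)"
          using endpoint[OF that] p hd_perm_of[OF xs] last_perm_of[OF xs] by auto
        show ?thesis using Bd xs A Bk E by blast
      qed
    qed
  qed
qed



lemma num_red_eq:
  assumes xs: "xs \<in> perms n"
  shows "num_reduced n xs = card (Red n (perm_of xs))"
proof -
  have f: "isperm n (perm_of xs)" using perms_isperm[OF xs] .
  have cl: "coxeter_length n xs = ninv n (perm_of xs)"
    unfolding coxeter_length_def
  proof (rule Least_equality)
    show "\<exists>w\<in>words_of n xs. length w = ninv n (perm_of xs)"
      using exists_reduced[OF f] by (auto simp: words_of_def)
    fix y assume "\<exists>w\<in>words_of n xs. length w = y"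
    then obtain w where "set w \<subseteq> {1..<n}" "word_perm w = perm_of xs" "length w = y"
      by (auto simp: words_of_def)
    then show "ninv n (perm_of xs) \<le> y" using ninv_word_le by metis
  qed
  have "reduced_words n xs = Red n (perm_of xs)"
    unfolding reduced_words_def words_of_def Red_def cl by auto
  then show ?thesis by (simp add: num_reduced_def)
qed

lemma card_pairs: "card {(a, b). p \<le> a \<and> a < b \<and> b \<le> (n::nat)} = (n + 1 - p) choose 2"
proof (induction n)
  case 0
  have e: "{(a, b). p \<le> a \<and> a < b \<and> b \<le> (0::nat)} = {}" by auto
  show ?case unfolding e by (cases p) auto
next
  case (Suc n)
  have eq: "{(a, b). p \<le> a \<and> a < b \<and> b \<le> Suc n} = {(a, b). p \<le> a \<and> a < b \<and> b \<le> n} \<union> (\<lambda>a. (a, Suc n)) ` {p..n}"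
    by auto
  have disj: "{(a, b). p \<le> a \<and> a < b \<and> b \<le> n} \<inter> (\<lambda>a. (a, Suc n)) ` {p..n} = {}" by auto
  have fin: "finite {(a, b). p \<le> a \<and> a < b \<and> b \<le> n}"
    by (rule finite_subset[of _ "{0..n} \<times> {0..n}"]) auto
  have c2: "card ((\<lambda>a. (a, Suc n)) ` {p..n}) = Suc n - p"
    by (simp add: card_image inj_on_def)
  have "card {(a, b). p \<le> a \<and> a < b \<and> b \<le> Suc n} = ((n + 1 - p) choose 2) + (Suc n - p)"
    unfolding eq using card_Un_disjoint[OF fin _ disj] c2 Suc.IH by simp
  also have "\<dots> = (Suc n + 1 - p) choose 2"
  proof (cases "p \<le> Suc n")
    case True
    define k where "k = n + 1 - p"
    have sk: "Suc n + 1 - p = Suc k" unfolding k_def using True by simp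
    have kk: "Suc n - p = k" unfolding k_def by simp
    have "Suc k choose 2 = (k choose 2) + k"
      using binomial_Suc_Suc[of k 1] by (simp add: numeral_2_eq_2)
    then show ?thesis unfolding sk kk k_def[symmetric] by simp
  next
    case False then show ?thesis by simp
  qed
  finally show ?case .
qed

lemma ninv_bet:
  assumes p: "1 \<le> p"
  shows "ninv n (bet p n) = (n + 1 - p) choose 2"
proof -
  have "inv_set n (bet p n) = {(a, b). p \<le> a \<and> a < b \<and> b \<le> n}"
    using p by (auto simp: inv_set_def bet_def split: if_splits)
  then show ?thesis using card_pairs by (simp add: ninv_def)
qed

lemma card_A:
  assumes p: "1 \<le> p" "p \<le> n"
  shows "card (Red n (bet 1 p) \<inter> {u. set u \<subseteq> {x. x < p}}) = num_reduced p (rev [1..<p+1])"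
proof -
  have g: "isperm p (bet 1 p)" using isperm_bet by simp
  have "Red n (bet 1 p) \<inter> {u. set u \<subseteq> {x. x < p}} = Red p (bet 1 p)"
  proof (rule set_eqI)
    fix u
    show "u \<in> Red n (bet 1 p) \<inter> {u. set u \<subseteq> {x. x < p}} \<longleftrightarrow> u \<in> Red p (bet 1 p)"
    proof
      assume h: "u \<in> Red n (bet 1 p) \<inter> {u. set u \<subseteq> {x. x < p}}"
      then have s: "set u \<subseteq> {1..<p}" using RedD by fastforce
      then show "u \<in> Red p (bet 1 p)" using Red_mono[OF g s p(2)] h by simp
    next
      assume h: "u \<in> Red p (bet 1 p)"
      then have s: "set u \<subseteq> {1..<p}" using RedD by blast
      then show "u \<in> Red n (bet 1 p) \<inter> {u. set u \<subseteq> {x. x < p}}" using Red_mono[OF g s p(2)] h by auto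
    qed
  qed
  then show ?thesis using num_red_eq[OF rev_perms[of p]] perm_of_rev[of p] by simp
qed

lemma card_B_aux:
  "1 \<le> p \<Longrightarrow> p \<le> n \<Longrightarrow>
    card (Red n (bet p n) \<inter> {v. set v \<subseteq> {x. \<not> x < p}}) = card (Red (n + 1 - p) (bet 1 (n + 1 - p)))"
proof (induction p arbitrary: n rule: nat_induct_at_least)
  case base
  have "Red n (bet 1 n) \<inter> {v. set v \<subseteq> {x. \<not> x < 1}} = Red n (bet 1 n)"
    using RedD by fastforce
  then show ?case by simp
next
  case (Suc p)
  then obtain m where n: "n = Suc m" and pm: "p \<le> m" by (cases n) auto
  define g where "g = bet p m"
  have g: "isperm m g" unfolding g_def using isperm_bet Suc.hyps by simp
  have rel: "bet (Suc p) (Suc m) = shift1 g" unfolding g_def using rel_front_R[of "Suc p" m] Suc.hyps by simp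
  have eq: "Red (Suc m) (shift1 g) \<inter> {v. set v \<subseteq> {x. \<not> x < Suc p}} = map Suc ` (Red m g \<inter> {v. set v \<subseteq> {x. \<not> x < p}})"
  proof
    show "Red (Suc m) (shift1 g) \<inter> {v. set v \<subseteq> {x. \<not> x < Suc p}} \<subseteq> map Suc ` (Red m g \<inter> {v. set v \<subseteq> {x. \<not> x < p}})"
    proof
      fix v assume h: "v \<in> Red (Suc m) (shift1 g) \<inter> {v. set v \<subseteq> {x. \<not> x < Suc p}}"
      then have sv: "set v \<subseteq> {1..<Suc m}" "set v \<subseteq> {x. \<not> x < Suc p}" using RedD by auto
      define y where "y = map (\<lambda>x. x - 1) v"
      have vy: "v = map Suc y" unfolding y_def using sv Suc.hyps by (induction v) auto
      have vv: "\<forall>x\<in>set v. Suc p \<le> x \<and> x < Suc m" using sv by auto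
      have sy: "set y \<subseteq> {1..<m}"
      proof
        fix x assume "x \<in> set y"
        then obtain x' where "x' \<in> set v" "x = x' - 1" unfolding y_def by auto
        then show "x \<in> {1..<m}" using vv Suc.hyps by fastforce
      qed
      have "y \<in> Red m g" using MapRed[OF g sy] h vy by simp
      moreover have "set y \<subseteq> {x. \<not> x < p}" unfolding y_def using sv by auto
      ultimately show "v \<in> map Suc ` (Red m g \<inter> {v. set v \<subseteq> {x. \<not> x < p}})" using vy by blast
    qed
    show "map Suc ` (Red m g \<inter> {v. set v \<subseteq> {x. \<not> x < p}}) \<subseteq> Red (Suc m) (shift1 g) \<inter> {v. set v \<subseteq> {x. \<not> x < Suc p}}"
    proof
      fix v assume "v \<in> map Suc ` (Red m g \<inter> {v. set v \<subseteq> {x. \<not> x < p}})"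
      then obtain y where y: "y \<in> Red m g" "set y \<subseteq> {x. \<not> x < p}" "v = map Suc y" by blast
      have sy: "set y \<subseteq> {1..<m}" using RedD[OF y(1)] by simp
      show "v \<in> Red (Suc m) (shift1 g) \<inter> {v. set v \<subseteq> {x. \<not> x < Suc p}}"
        using MapRed[OF g sy] y by auto
    qed
  qed
  have inj: "inj_on (map Suc) X" for X :: "nat list set"
    by (rule inj_on_subset[OF inj_mapI]) auto
  have "card (Red n (bet (Suc p) n) \<inter> {v. set v \<subseteq> {x. \<not> x < Suc p}})
      = card (Red m g \<inter> {v. set v \<subseteq> {x. \<not> x < p}})"
    unfolding n rel eq using card_image[OF inj] by simp
  also have "\<dots> = card (Red (m + 1 - p) (bet 1 (m + 1 - p)))"
    unfolding g_def using Suc.IH[OF pm] .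
  finally show ?case using n by simp
qed

lemma card_B:
  assumes "1 \<le> p" "p \<le> n"
  shows "card (Red n (bet p n) \<inter> {v. set v \<subseteq> {x. \<not> x < p}}) = num_reduced (n + 1 - p) (rev [1..<(n + 1 - p)+1])"
  using card_B_aux[OF assms] num_red_eq[OF rev_perms] perm_of_rev by simp

theorem proposition1p3:
  fixes n p :: nat
  assumes "1 \<le> n" and "1 \<le> p" and "p \<le> n"
  shows "((p choose 2) + ((n + 1 - p) choose 2) choose (p choose 2))
           * num_reduced p (rev [1..<p+1])
           * num_reduced (n + 1 - p) (rev [1..<(n + 1 - p)+1])
         = (\<Sum>\<pi>\<in>B p n. num_reduced n \<pi>)"
proof -
  let ?P = "\<lambda>x::nat. x < p"
  let ?S = "{w. inSh n ?P (bet 1 p) (bet p n) w}"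
  have Bc: "B p n = {xs \<in> perms n. perm_of xs \<in> T p n}" using B_char assms by simp
  have bij: "bij_betw perm_of (B p n) (T p n)"
  proof (rule bij_betw_imageI)
    show "inj_on perm_of (B p n)" unfolding Bc using perm_of_inj by (auto simp: inj_on_def)
    show "perm_of ` B p n = T p n"
    proof
      show "perm_of ` B p n \<subseteq> T p n" unfolding Bc by auto
      show "T p n \<subseteq> perm_of ` B p n"
      proof
        fix f assume f: "f \<in> T p n"
        from list_of_perm[OF T_isperm[OF f]] have "map f [1..<n+1] \<in> B p n" "perm_of (map f [1..<n+1]) = f"
          using f unfolding Bc by auto
        then show "f \<in> perm_of ` B p n" by (metis imageI)
      qed
    qed
  qed
  have "(\<Sum>\<pi>\<in>B p n. num_reduced n \<pi>) = (\<Sum>\<pi>\<in>B p n. card (Red n (perm_of \<pi>)))"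
    using num_red_eq unfolding Bc by (intro sum.cong) auto
  also have "\<dots> = (\<Sum>f\<in>T p n. card (Red n f))"
    using sum.reindex_bij_betw[OF bij, of "\<lambda>f. card (Red n f)"] by simp
  also have "\<dots> = card ?S" unfolding T_def by (rule sum_Red)
  also have "\<dots> = ((ninv n (bet 1 p) + ninv n (bet p n)) choose ninv n (bet 1 p))
     * card (Red n (bet 1 p) \<inter> {u. set u \<subseteq> {x. ?P x}}) * card (Red n (bet p n) \<inter> {v. set v \<subseteq> {x. \<not> ?P x}})"
    by (rule Sh_card)
  also have "\<dots> = ((p choose 2) + ((n + 1 - p) choose 2) choose (p choose 2))
           * num_reduced p (rev [1..<p+1])
           * num_reduced (n + 1 - p) (rev [1..<(n + 1 - p)+1])"
  proof -
    have a: "ninv n (bet 1 p) = p choose 2"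
      using ninv_mono[OF isperm_bet[of 1 p], of n] ninv_bet[of 1 p] assms by simp
    have b: "ninv n (bet p n) = (n + 1 - p) choose 2" using ninv_bet assms by simp
    show ?thesis using a b card_A[OF assms(2,3)] card_B[OF assms(2,3)] by simp
  qed
  finally show ?thesis by simp
qed


end
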